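(* For any $\delta\in(0,1)$ there exists a constant $c(\delta)>0$ such that the following holds. Let $G=(V,E)$ be a simple graph on $n$ vertices with minimal degree at least $\delta n$. Then $\gamma(G)\ge c(\delta)\,\Phi(G)$.
   Context: Let $P$ be the transition matrix of the simple random walk on $G$ and $\pi(v)=\deg(v)/2|E|$ its stationary distribution. $P$ is self-adjoint on $L^2(\pi)$ with real eigenvalues $1=\lambda_1\ge\lambda_2\ge\dots\ge\lambda_n\ge -1$; the spectral gap is $\gamma(G)=1-\lambda_2$. For $S\subseteq V$, $\mathrm{Vol}(S)=\sum_{v\in S}\deg(v)$, $\partial S=\{(u,v)\in E: u\in S, v\notin S\}$, $\pi(S)=\sum_{v\in S}\pi(v)$, and the Cheeger constant is $\Phi(G)=\min_{S:\pi(S)\le 1/2}|\partial S|/\mathrm{Vol}(S)$. *)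

theory Defs
  imports "Jordan_Normal_Form.Char_Poly"
begin

definition simple_graph :: "nat \<Rightarrow> (nat \<Rightarrow> nat \<Rightarrow> bool) \<Rightarrow> bool" where
  "simple_graph n E \<longleftrightarrow> (\<forall>u v. E u v \<longrightarrow> E v u) \<and> (\<forall>u. \<not> E u u)
     \<and> (\<forall>u v. E u v \<longrightarrow> u < n \<and> v < n)"

definition gdeg :: "nat \<Rightarrow> (nat \<Rightarrow> nat \<Rightarrow> bool) \<Rightarrow> nat \<Rightarrow> nat" where
  "gdeg n E v = card {u. u < n \<and> E v u}"

definition walk_matrix :: "nat \<Rightarrow> (nat \<Rightarrow> nat \<Rightarrow> bool) \<Rightarrow> real mat" where
  "walk_matrix n E = mat n n (\<lambda>(i,j). if E i j then 1 / real (gdeg n E i) else 0)"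

definition eigenvalues_desc :: "real mat \<Rightarrow> real list" where
  "eigenvalues_desc M = rev (sorted_list_of_multiset (proots (char_poly M)))"

(* spectral gap 1 - lambda_2 *)
definition spectral_gap :: "nat \<Rightarrow> (nat \<Rightarrow> nat \<Rightarrow> bool) \<Rightarrow> real" where
  "spectral_gap n E = 1 - eigenvalues_desc (walk_matrix n E) ! 1"

definition gvol :: "nat \<Rightarrow> (nat \<Rightarrow> nat \<Rightarrow> bool) \<Rightarrow> nat set \<Rightarrow> nat" where
  "gvol n E S = (\<Sum>v\<in>S. gdeg n E v)"

definition gboundary :: "nat \<Rightarrow> (nat \<Rightarrow> nat \<Rightarrow> bool) \<Rightarrow> nat set \<Rightarrow> (nat \<times> nat) set" where
  "gboundary n E S = {(u,v). u \<in> S \<and> v < n \<and> v \<notin> S \<and> E u v}"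

definition stat_measure :: "nat \<Rightarrow> (nat \<Rightarrow> nat \<Rightarrow> bool) \<Rightarrow> nat set \<Rightarrow> real" where
  "stat_measure n E S = real (gvol n E S) / real (gvol n E {0..<n})"

definition cheeger :: "nat \<Rightarrow> (nat \<Rightarrow> nat \<Rightarrow> bool) \<Rightarrow> real" where
  "cheeger n E = Min {real (card (gboundary n E S)) / real (gvol n E S) | S.
      S \<subseteq> {0..<n} \<and> S \<noteq> {} \<and> stat_measure n E S \<le> 1/2}"

end

theory Submission
  imports Defs "HOL-Analysis.Analysis" "Jordan_Normal_Form.Jordan_Normal_Form_Uniqueness"
    "Jordan_Normal_Form.Jordan_Normal_Form_Existence"
begin

locale dg =
  fixes n :: nat and E :: "nat \<Rightarrow> nat \<Rightarrow> bool" and \<delta> :: real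
  assumes sg: "simple_graph n E" and dpos: "0 < \<delta>"
    and degb: "\<forall>v<n. \<delta> * real n \<le> real (gdeg n E v)"
begin

definition d :: "nat \<Rightarrow> real" where "d x = real (gdeg n E x)"
definition es :: "(nat \<Rightarrow> nat \<Rightarrow> real) \<Rightarrow> real" where
  "es g = (\<Sum>x<n. \<Sum>y<n. if E x y then g x y else 0)"
definition nrm :: "(nat \<Rightarrow> real) \<Rightarrow> real" where
  "nrm f = (\<Sum>x<n. d x * (f x)\<^sup>2)"
definition Qf :: "(nat \<Rightarrow> real) \<Rightarrow> real" where
  "Qf f = es (\<lambda>x y. (f x - f y)\<^sup>2)"

lemma Esym: "E x y \<Longrightarrow> E y x" using sg unfolding simple_graph_def by blast
lemma Eirr: "\<not> E x x" using sg unfolding simple_graph_def by blast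
lemma Ebound: "E x y \<Longrightarrow> x < n \<and> y < n" using sg unfolding simple_graph_def by blast

lemma d_ge: "x < n \<Longrightarrow> \<delta> * real n \<le> d x" using degb unfolding d_def by auto
lemma d_pos: "x < n \<Longrightarrow> 0 < d x"
proof -
  assume x: "x < n"
  then have "0 < \<delta> * real n" using dpos by simp
  then show ?thesis using d_ge[OF x] by linarith
qed
lemma d_nonneg: "0 \<le> d x" unfolding d_def by simp

lemma deg_sum: "(\<Sum>y<n. if E x y then c else 0) = c * d x"
proof -
  have "(\<Sum>y<n. if E x y then c else 0) = (\<Sum>y\<in>{y\<in>{..<n}. E x y}. c)"
    by (rule sum.mono_neutral_cong_right) auto
  also have "\<dots> = c * card {y\<in>{..<n}. E x y}" by simp
  also have "{y\<in>{..<n}. E x y} = {u. u < n \<and> E x u}" by auto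
  finally show ?thesis unfolding d_def gdeg_def by simp
qed

lemma es_left: "es (\<lambda>x y. g x) = (\<Sum>x<n. d x * g x)"
  unfolding es_def by (simp add: deg_sum mult.commute)

lemma es_swap: "es g = es (\<lambda>x y. g y x)"
proof -
  have "es g = (\<Sum>y<n. \<Sum>x<n. if E x y then g x y else 0)"
    unfolding es_def by (rule sum.swap)
  also have "\<dots> = es (\<lambda>x y. g y x)" unfolding es_def
    by (intro sum.cong refl) (auto dest: Esym)
  finally show ?thesis .
qed

lemma es_right: "es (\<lambda>x y. g y) = (\<Sum>x<n. d x * g x)"
  using es_swap[of "\<lambda>x y. g y"] es_left by simp

lemma es_add: "es (\<lambda>x y. a x y + b x y) = es a + es b"
  unfolding es_def sum.distrib[symmetric] by (intro sum.cong refl) auto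

lemma es_cmult: "es (\<lambda>x y. c * a x y) = c * es a"
  unfolding es_def sum_distrib_left by (intro sum.cong refl) auto

lemma es_diff: "es (\<lambda>x y. a x y - b x y) = es a - es b"
  unfolding es_def sum_subtractf[symmetric] by (intro sum.cong refl) auto

lemma es_mono: "(\<And>x y. x < n \<Longrightarrow> y < n \<Longrightarrow> E x y \<Longrightarrow> a x y \<le> b x y) \<Longrightarrow> es a \<le> es b"
  unfolding es_def by (intro sum_mono) auto

lemma es_nonneg: "(\<And>x y. x < n \<Longrightarrow> y < n \<Longrightarrow> E x y \<Longrightarrow> 0 \<le> a x y) \<Longrightarrow> 0 \<le> es a"
  using es_mono[of "\<lambda>x y. 0" a] unfolding es_def by simp

lemma es_cong: "(\<And>x y. x < n \<Longrightarrow> y < n \<Longrightarrow> E x y \<Longrightarrow> a x y = b x y) \<Longrightarrow> es a = es b"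
  unfolding es_def by (intro sum.cong refl) auto

lemma Qf_expand: "Qf f = 2 * nrm f - 2 * es (\<lambda>x y. f x * f y)"
proof -
  have "Qf f = es (\<lambda>x y. (f x)\<^sup>2 + (f y)\<^sup>2 - 2 * (f x * f y))"
    unfolding Qf_def by (rule es_cong) (simp add: power2_eq_square algebra_simps)
  also have "\<dots> = es (\<lambda>x y. (f x)\<^sup>2) + es (\<lambda>x y. (f y)\<^sup>2) - 2 * es (\<lambda>x y. f x * f y)"
    by (simp add: es_diff es_add es_cmult)
  also have "\<dots> = 2 * nrm f - 2 * es (\<lambda>x y. f x * f y)"
    by (simp add: es_left es_right nrm_def)
  finally show ?thesis .
qed

lemma Qf_nonneg: "0 \<le> Qf f" unfolding Qf_def by (rule es_nonneg) simp
lemma nrm_nonneg: "0 \<le> nrm f" unfolding nrm_def by (intro sum_nonneg mult_nonneg_nonneg d_nonneg) simp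

end

context dg begin

lemma n_pos: "x < n \<Longrightarrow> 0 < n" by simp

lemma cs_step:
  assumes x: "x < n"
  shows "(\<Sum>y<n. if E x y then g y else 0)\<^sup>2 \<le> nrm g * (\<Sum>y<n. if E x y \<and> g y \<noteq> 0 then 1 / d y else 0)"
proof -
  let ?a = "\<lambda>y. if E x y \<and> g y \<noteq> 0 then sqrt (d y) * g y else 0"
  let ?b = "\<lambda>y. if E x y \<and> g y \<noteq> 0 then 1 / sqrt (d y) else 0"
  have 1: "(\<Sum>y<n. if E x y then g y else 0) = (\<Sum>y<n. ?a y * ?b y)"
  proof (intro sum.cong refl)
    fix y assume "y \<in> {..<n}"
    then have "0 < d y" using d_pos by simp
    then show "(if E x y then g y else 0) = ?a y * ?b y" by auto
  qed
  have 2: "(\<Sum>y<n. (?a y)\<^sup>2) \<le> nrm g"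
    unfolding nrm_def
  proof (intro sum_mono)
    fix y assume "y \<in> {..<n}"
    then have "0 < d y" using d_pos by simp
    then show "(?a y)\<^sup>2 \<le> d y * (g y)\<^sup>2" by (auto simp: power_mult_distrib)
  qed
  have 3: "(\<Sum>y<n. (?b y)\<^sup>2) = (\<Sum>y<n. if E x y \<and> g y \<noteq> 0 then 1 / d y else 0)"
  proof (intro sum.cong refl)
    fix y assume "y \<in> {..<n}"
    then have "0 < d y" using d_pos by simp
    then show "(?b y)\<^sup>2 = (if E x y \<and> g y \<noteq> 0 then 1 / d y else 0)" by (auto simp: power_divide)
  qed
  have 4: "0 \<le> (\<Sum>y<n. (?b y)\<^sup>2)" by (intro sum_nonneg) simp
  show ?thesis unfolding 1
    using Cauchy_Schwarz_ineq_sum[of ?a ?b "{..<n}"] 2 3 4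
    by (metis (no_types, lifting) mult_right_mono order_trans)
qed

lemma single_bound:
  assumes N: "0 < nrm g" and good: "\<theta> * nrm g \<le> es (\<lambda>x y. g x * g y)" and th: "0 < \<theta>"
  shows "\<theta>\<^sup>2 \<le> (\<Sum>x<n. (1 / d x) * (\<Sum>y<n. if E x y \<and> g y \<noteq> 0 then 1 / d y else 0))"
proof -
  define s where "s x = (\<Sum>y<n. if E x y then g y else 0)" for x
  have a: "es (\<lambda>x y. g x * g y) = (\<Sum>x<n. g x * s x)"
    unfolding es_def s_def sum_distrib_left by (intro sum.cong refl) auto
  have amgm: "g x * s x \<le> (\<theta>/2) * (d x * (g x)\<^sup>2) + (s x)\<^sup>2 / (2 * \<theta> * d x)" if x: "x < n" for x
  proof -
    have dx: "0 < d x" using d_pos x by simp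
    have "0 \<le> (\<theta> * d x * g x - s x)\<^sup>2" by simp
    then have "2 * \<theta> * d x * (g x * s x) \<le> (\<theta> * d x * g x)\<^sup>2 + (s x)\<^sup>2"
      by (simp add: power2_eq_square algebra_simps)
    then have "g x * s x \<le> ((\<theta> * d x * g x)\<^sup>2 + (s x)\<^sup>2) / (2 * \<theta> * d x)"
      using dx th by (simp add: field_simps)
    also have "\<dots> = (\<theta>/2) * (d x * (g x)\<^sup>2) + (s x)\<^sup>2 / (2 * \<theta> * d x)"
      using dx th by (simp add: field_simps power2_eq_square)
    finally show ?thesis .
  qed
  have "(\<Sum>x<n. g x * s x) \<le> (\<Sum>x<n. (\<theta>/2) * (d x * (g x)\<^sup>2) + (s x)\<^sup>2 / (2 * \<theta> * d x))"
    by (intro sum_mono amgm) simp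
  then have "\<theta> * nrm g \<le> (\<Sum>x<n. (\<theta>/2) * (d x * (g x)\<^sup>2) + (s x)\<^sup>2 / (2 * \<theta> * d x))"
    using good unfolding a by linarith
  also have "\<dots> = (\<theta>/2) * nrm g + (1 / (2*\<theta>)) * (\<Sum>x<n. (s x)\<^sup>2 / d x)"
    unfolding nrm_def sum.distrib sum_distrib_left by (intro arg_cong2[where f="(+)"] sum.cong refl) auto
  finally have "\<theta> * nrm g \<le> (\<theta>/2) * nrm g + (1 / (2*\<theta>)) * (\<Sum>x<n. (s x)\<^sup>2 / d x)" .
  then have "2 * \<theta> * (\<theta> * nrm g) \<le> 2 * \<theta> * ((\<theta>/2) * nrm g + (1 / (2*\<theta>)) * (\<Sum>x<n. (s x)\<^sup>2 / d x))"
    using th by (intro mult_left_mono) auto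
  also have "\<dots> = \<theta> * (\<theta> * nrm g) + (\<Sum>x<n. (s x)\<^sup>2 / d x)"
    using th by (simp add: algebra_simps)
  finally have b: "\<theta>\<^sup>2 * nrm g \<le> (\<Sum>x<n. (s x)\<^sup>2 / d x)"
    by (simp add: power2_eq_square algebra_simps)
  have c: "(\<Sum>x<n. (s x)\<^sup>2 / d x) \<le> (\<Sum>x<n. (1 / d x) * (nrm g * (\<Sum>y<n. if E x y \<and> g y \<noteq> 0 then 1 / d y else 0)))"
  proof (intro sum_mono)
    fix x assume "x \<in> {..<n}"
    then have x: "x < n" by simp
    have dx: "0 < d x" using d_pos x by simp
    show "(s x)\<^sup>2 / d x \<le> (1 / d x) * (nrm g * (\<Sum>y<n. if E x y \<and> g y \<noteq> 0 then 1 / d y else 0))"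
      using cs_step[OF x, of g] dx unfolding s_def by (simp add: divide_right_mono)
  qed
  also have "\<dots> = nrm g * (\<Sum>x<n. (1 / d x) * (\<Sum>y<n. if E x y \<and> g y \<noteq> 0 then 1 / d y else 0))"
    by (simp add: sum_distrib_left algebra_simps)
  finally have "\<theta>\<^sup>2 * nrm g \<le> nrm g * (\<Sum>x<n. (1 / d x) * (\<Sum>y<n. if E x y \<and> g y \<noteq> 0 then 1 / d y else 0))"
    using b by linarith
  then show ?thesis using N by (simp add: mult.commute)
qed

lemma disjoint_bound:
  fixes gs :: "nat \<Rightarrow> nat \<Rightarrow> real" and I :: "nat set"
  assumes fin: "finite I"
   and disj: "\<And>i j x. i \<in> I \<Longrightarrow> j \<in> I \<Longrightarrow> i \<noteq> j \<Longrightarrow> x < n \<Longrightarrow> gs i x = 0 \<or> gs j x = 0"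
   and pos: "\<And>i. i \<in> I \<Longrightarrow> 0 < nrm (gs i)"
   and good: "\<And>i. i \<in> I \<Longrightarrow> \<theta> * nrm (gs i) \<le> es (\<lambda>x y. gs i x * gs i y)"
   and th: "0 < \<theta>"
  shows "real (card I) * \<theta>\<^sup>2 \<le> 1 / \<delta>"
proof -
  have "real (card I) * \<theta>\<^sup>2 = (\<Sum>i\<in>I. \<theta>\<^sup>2)" by simp
  also have "\<dots> \<le> (\<Sum>i\<in>I. \<Sum>x<n. (1 / d x) * (\<Sum>y<n. if E x y \<and> gs i y \<noteq> 0 then 1 / d y else 0))"
    by (intro sum_mono single_bound pos good th)
  also have "\<dots> = (\<Sum>x<n. (1 / d x) * (\<Sum>y<n. (\<Sum>i\<in>I. if E x y \<and> gs i y \<noteq> 0 then 1 / d y else 0)))"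
  proof -
    let ?F = "\<lambda>i x y. if E x y \<and> gs i y \<noteq> 0 then 1 / d y else (0::real)"
    have "(\<Sum>i\<in>I. \<Sum>x<n. (1 / d x) * (\<Sum>y<n. ?F i x y)) = (\<Sum>i\<in>I. \<Sum>x<n. \<Sum>y<n. (1 / d x) * ?F i x y)"
      by (simp only: sum_distrib_left)
    also have "\<dots> = (\<Sum>x<n. \<Sum>i\<in>I. \<Sum>y<n. (1 / d x) * ?F i x y)" by (rule sum.swap)
    also have "\<dots> = (\<Sum>x<n. \<Sum>y<n. \<Sum>i\<in>I. (1 / d x) * ?F i x y)" by (intro sum.cong refl sum.swap)
    also have "\<dots> = (\<Sum>x<n. (1 / d x) * (\<Sum>y<n. \<Sum>i\<in>I. ?F i x y))" by (simp only: sum_distrib_left)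
    finally show ?thesis .
  qed
  also have "\<dots> \<le> (\<Sum>x<n. (1 / d x) * (\<Sum>y<n. if E x y then 1 / (\<delta> * real n) else 0))"
  proof (intro sum_mono mult_left_mono)
    fix x y assume x: "x \<in> {..<n}" and y: "y \<in> {..<n}"
    have dy: "0 < d y" "\<delta> * real n \<le> d y" using d_pos d_ge y by auto
    have dn: "0 < \<delta> * real n" using dpos y by simp
    have "\<forall>a\<in>{i\<in>I. gs i y \<noteq> 0}. \<forall>b\<in>{i\<in>I. gs i y \<noteq> 0}. a = b"
      using disj y by auto
    then have c1: "card {i\<in>I. gs i y \<noteq> 0} \<le> Suc 0"
      using fin by (subst card_le_Suc0_iff_eq) auto
    have "(\<Sum>i\<in>I. if E x y \<and> gs i y \<noteq> 0 then 1 / d y else 0)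
        = (\<Sum>i\<in>{i\<in>I. gs i y \<noteq> 0}. if E x y then 1 / d y else 0)"
      using fin by (intro sum.mono_neutral_cong_right) auto
    also have "\<dots> = real (card {i\<in>I. gs i y \<noteq> 0}) * (if E x y then 1 / d y else 0)" by simp
    also have "\<dots> \<le> (if E x y then 1 / d y else 0)"
      using dy c1 by (intro mult_left_le_one_le) auto
    also have "\<dots> \<le> (if E x y then 1 / (\<delta> * real n) else 0)"
      using dy dn by (auto intro!: divide_left_mono)
    finally show "(\<Sum>i\<in>I. if E x y \<and> gs i y \<noteq> 0 then 1 / d y else 0) \<le> (if E x y then 1 / (\<delta> * real n) else 0)" .
  next
    fix x assume "x \<in> {..<n}" then show "0 \<le> 1 / d x" using d_nonneg by simp
  qed
  also have "\<dots> = (\<Sum>x<n. (1 / d x) * (d x / (\<delta> * real n)))"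
    by (simp add: deg_sum)
  also have "\<dots> = (\<Sum>x<n. 1 / (\<delta> * real n))"
  proof (intro sum.cong refl)
    fix x assume "x \<in> {..<n}"
    then have "d x \<noteq> 0" using d_pos by (metis lessThan_iff less_irrefl)
    then show "(1 / d x) * (d x / (\<delta> * real n)) = 1 / (\<delta> * real n)" by simp
  qed
  also have "\<dots> \<le> 1 / \<delta>"
  proof (cases "n = 0")
    case True
    then show ?thesis using dpos by simp
  next
    case False
    then show ?thesis by simp
  qed
  finally show ?thesis .
qed

end

context dg begin

lemma gvol_eq: "real (gvol n E S) = (\<Sum>x\<in>S. d x)"
  unfolding gvol_def d_def by simp

lemma gvol_ind: "S \<subseteq> {..<n} \<Longrightarrow> real (gvol n E S) = (\<Sum>x<n. d x * (if x \<in> S then 1 else 0))"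
  unfolding gvol_eq by (rule sum.mono_neutral_cong_left) auto

lemma card_boundary: assumes "S \<subseteq> {..<n}"
  shows "real (card (gboundary n E S)) = es (\<lambda>x y. if x \<in> S \<and> y \<notin> S then 1 else 0)"
proof -
  have sub: "gboundary n E S \<subseteq> {..<n} \<times> {..<n}"
    using assms unfolding gboundary_def by auto
  have "real (card (gboundary n E S)) = (\<Sum>p\<in>gboundary n E S. 1)" by simp
  also have "\<dots> = (\<Sum>p\<in>{..<n} \<times> {..<n}. if p \<in> gboundary n E S then 1 else 0)"
    using sub by (intro sum.mono_neutral_cong_left) auto
  also have "\<dots> = (\<Sum>(x,y)\<in>{..<n} \<times> {..<n}. if (x, y) \<in> gboundary n E S then 1 else 0)"
    by (intro sum.cong) auto
  also have "\<dots> = (\<Sum>x<n. \<Sum>y<n. if (x, y) \<in> gboundary n E S then 1 else 0)"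
    by (rule sum.cartesian_product[symmetric])
  also have "\<dots> = es (\<lambda>x y. if x \<in> S \<and> y \<notin> S then 1 else 0)"
    unfolding es_def gboundary_def by (intro sum.cong refl) auto
  finally show ?thesis .
qed

lemma vol_pos: "0 < n \<Longrightarrow> 0 < real (gvol n E {0..<n})"
  unfolding gvol_eq using d_pos by (intro sum_pos) auto

lemma cheeger_le:
  assumes S: "S \<subseteq> {0..<n}" "S \<noteq> {}" "stat_measure n E S \<le> 1/2"
  shows "cheeger n E * real (gvol n E S) \<le> real (card (gboundary n E S))"
proof -
  let ?r = "\<lambda>S. real (card (gboundary n E S)) / real (gvol n E S)"
  let ?P = "\<lambda>S. S \<subseteq> {0..<n} \<and> S \<noteq> {} \<and> stat_measure n E S \<le> 1/2"
  have eq: "{?r S | S. ?P S} = ?r ` {S. ?P S}" by auto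
  have fin: "finite {?r S | S. ?P S}" unfolding eq
    by (rule finite_imageI) (rule finite_subset[of _ "Pow {0..<n}"], auto)
  have "cheeger n E \<le> ?r S" unfolding cheeger_def
    by (rule Min_le[OF fin]) (use S in blast)
  moreover have "0 < real (gvol n E S)"
  proof -
    obtain x where "x \<in> S" using S by auto
    then show ?thesis unfolding gvol_eq using S d_pos
      by (intro sum_pos2[of _ x]) (auto intro: finite_subset d_nonneg)
  qed
  ultimately show ?thesis by (simp add: field_simps)
qed

lemma stat_mono: "A \<subseteq> B \<Longrightarrow> finite B \<Longrightarrow> stat_measure n E A \<le> stat_measure n E B"
  unfolding stat_measure_def gvol_def
  by (intro divide_right_mono) (auto intro!: sum_mono2 sum_nonneg)

lemma coarea_aux:
  "\<forall>h. card {x. x < n \<and> 0 < h x} = m \<longrightarrow> (\<forall>x<n. 0 \<le> h x) \<longrightarrow>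
     stat_measure n E {x. x < n \<and> 0 < h x} \<le> 1/2 \<longrightarrow>
     cheeger n E * (\<Sum>x<n. d x * h x) \<le> es (\<lambda>x y. max 0 (h x - h y))"
proof (induction m rule: less_induct)
  case (less m)
  show ?case
  proof (intro allI impI)
    fix h :: "nat \<Rightarrow> real"
    assume cm: "card {x. x < n \<and> 0 < h x} = m" and hnn: "\<forall>x<n. 0 \<le> h x"
      and st: "stat_measure n E {x. x < n \<and> 0 < h x} \<le> 1/2"
    define S where "S = {x. x < n \<and> 0 < h x}"
    have finS: "finite S" unfolding S_def by simp
    show "cheeger n E * (\<Sum>x<n. d x * h x) \<le> es (\<lambda>x y. max 0 (h x - h y))"
    proof (cases "S = {}")
      case True
      then have "\<forall>x<n. h x = 0" using hnn unfolding S_def by force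
      then have "(\<Sum>x<n. d x * h x) = 0" by simp
      moreover have "0 \<le> es (\<lambda>x y. max 0 (h x - h y))" by (rule es_nonneg) simp
      ultimately show ?thesis by simp
    next
      case False
      define a where "a = Min (h ` S)"
      have "a \<in> h ` S" unfolding a_def using False finS by (intro Min_in) auto
      then obtain z where zS: "z \<in> S" and za: "h z = a" by auto
      have a_le: "x \<in> S \<Longrightarrow> a \<le> h x" for x unfolding a_def using finS by simp
      have apos: "0 < a" using zS za unfolding S_def by simp
      define h' where "h' x = (if x \<in> S then h x - a else 0)" for x
      have h'nn: "\<forall>x<n. 0 \<le> h' x" using a_le unfolding h'_def by auto
      have sub: "{x. x < n \<and> 0 < h' x} \<subseteq> S - {z}"
        unfolding h'_def S_def using za by auto
      have "card {x. x < n \<and> 0 < h' x} \<le> card (S - {z})"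
        using sub finS by (intro card_mono) auto
      also have "\<dots> < card S" using zS finS by (rule_tac card_Diff1_less) auto
      finally have lt: "card {x. x < n \<and> 0 < h' x} < m" using cm unfolding S_def by simp
      have st': "stat_measure n E {x. x < n \<and> 0 < h' x} \<le> 1/2"
      proof -
        have "{x. x < n \<and> 0 < h' x} \<subseteq> S" using sub by blast
        then have "stat_measure n E {x. x < n \<and> 0 < h' x} \<le> stat_measure n E S"
          using finS by (rule stat_mono)
        then show ?thesis using st unfolding S_def by linarith
      qed
      have IH: "cheeger n E * (\<Sum>x<n. d x * h' x) \<le> es (\<lambda>x y. max 0 (h' x - h' y))"
        using less[OF lt] h'nn st' by blast
      have Ssub: "S \<subseteq> {..<n}" "S \<subseteq> {0..<n}" unfolding S_def by auto
      have ch: "cheeger n E * real (gvol n E S) \<le> real (card (gboundary n E S))"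
        using cheeger_le[OF Ssub(2) False] st unfolding S_def by simp
      have e1: "(\<Sum>x<n. d x * h x) = a * real (gvol n E S) + (\<Sum>x<n. d x * h' x)"
        unfolding gvol_ind[OF Ssub(1)] sum_distrib_left sum.distrib[symmetric]
        by (intro sum.cong refl) (use hnn in \<open>auto simp: h'_def S_def algebra_simps\<close>)
      have e2: "es (\<lambda>x y. max 0 (h x - h y)) = a * real (card (gboundary n E S)) + es (\<lambda>x y. max 0 (h' x - h' y))"
        unfolding card_boundary[OF Ssub(1)] es_cmult[symmetric] es_add[symmetric]
      proof (rule es_cong)
        fix x y assume xy: "x < n" "y < n" "E x y"
        show "max 0 (h x - h y) = a * (if x \<in> S \<and> y \<notin> S then 1 else 0) + max 0 (h' x - h' y)"
          using xy hnn a_le[of x] a_le[of y] unfolding h'_def S_def by (auto simp: max_def)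
      qed
      have "cheeger n E * (\<Sum>x<n. d x * h x) = a * (cheeger n E * real (gvol n E S)) + cheeger n E * (\<Sum>x<n. d x * h' x)"
        unfolding e1 by (simp add: algebra_simps)
      also have "\<dots> \<le> a * real (card (gboundary n E S)) + es (\<lambda>x y. max 0 (h' x - h' y))"
        using ch IH apos by (intro add_mono mult_left_mono) auto
      finally show ?thesis unfolding e2 .
    qed
  qed
qed

lemma coarea:
  assumes "\<forall>x<n. 0 \<le> h x" "stat_measure n E {x. x < n \<and> 0 < h x} \<le> 1/2"
  shows "cheeger n E * (\<Sum>x<n. d x * h x) \<le> es (\<lambda>x y. max 0 (h x - h y))"
  using coarea_aux assms by blast

end

lemma idist_cont: "continuous_on A (\<lambda>s::real. infdist s T)"
  by (intro continuous_on_infdist continuous_on_id)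

lemma idist_int: "(\<lambda>s::real. infdist s T) integrable_on {a..b}"
  by (rule integrable_continuous_real) (rule idist_cont)

lemma idist_ge:
  assumes "finite T" "T \<noteq> {}" "\<And>t. t \<in> T \<Longrightarrow> m \<le> dist s t"
  shows "m \<le> infdist s (T::real set)"
  unfolding infdist_def using assms by (auto intro!: cINF_greatest)

lemma int_split:
  assumes "a \<le> c" "c \<le> b"
  shows "integral {a..c} (\<lambda>s. infdist s T) + integral {c..b} (\<lambda>s. infdist s T) = integral {a..b} (\<lambda>s::real. infdist s T)"
  using assms by (intro Henstock_Kurzweil_Integration.integral_combine idist_int)

lemma int_nonneg: "0 \<le> integral {a..b} (\<lambda>s::real. infdist s T)"
  by (intro integral_nonneg idist_int) (simp add: infdist_nonneg)

lemma int_upper: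
  assumes "b \<le> a"
  shows "integral {b..a} (\<lambda>s::real. infdist s T) \<le> (a - b) * (infdist a T + (a - b))"
proof -
  have "integral {b..a} (\<lambda>s::real. infdist s T) \<le> integral {b..a} (\<lambda>s. infdist a T + (a - b))"
  proof (intro integral_le idist_int)
    show "(\<lambda>s. infdist a T + (a - b)) integrable_on {b..a}" by (intro integrable_continuous_real continuous_intros)
    fix s assume "s \<in> {b..a}"
    then have "dist s a \<le> a - b" by (auto simp: dist_real_def)
    then show "infdist s T \<le> infdist a T + (a - b)" using infdist_triangle[of s T a] by linarith
  qed
  also have "\<dots> = (a - b) * (infdist a T + (a - b))" using assms by (simp add: content_real)
  finally show ?thesis .
qed

lemma frac_ineq:
  fixes x y P Q :: real
  assumes "0 < P" "0 < Q"
  shows "(x + y)\<^sup>2 / (P + Q) \<le> x\<^sup>2 / P + y\<^sup>2 / Q"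
proof -
  have "0 \<le> (x * Q - y * P)\<^sup>2" by simp
  then have "(x + y)\<^sup>2 * (P * Q) \<le> (x\<^sup>2 * Q + y\<^sup>2 * P) * (P + Q)"
    by (simp add: power2_eq_square algebra_simps)
  then show ?thesis using assms by (simp add: field_simps)
qed

lemma int_lower_base:
  assumes fin: "finite T" and ne: "T \<noteq> {}" and la: "lo \<le> a" and emp: "T \<inter> {lo<..<a} = {}"
  shows "(a - lo)\<^sup>2 / 8 \<le> integral {lo..a} (\<lambda>s::real. infdist s T)"
proof -
  define l where "l = a - lo"
  have l0: "0 \<le> l" using la unfolding l_def by simp
  let ?p = "lo + l/4" and ?q = "a - l/4"
  have mid: "l / 4 \<le> infdist s T" if s: "s \<in> {?p..?q}" for s
  proof (rule idist_ge[OF fin ne])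
    fix t assume t: "t \<in> T"
    then have "t \<le> lo \<or> a \<le> t" using emp by auto
    then show "l / 4 \<le> dist s t" using s unfolding dist_real_def l_def by (smt (verit) atLeastAtMost_iff)
  qed
  have "integral {?p..?q} (\<lambda>s. l / 4) \<le> integral {?p..?q} (\<lambda>s::real. infdist s T)"
    by (intro integral_le idist_int mid integrable_continuous_real continuous_intros) simp_all
  moreover have "integral {?p..?q} (\<lambda>s. l / 4) = l\<^sup>2 / 8"
    using l0 by (simp add: content_real l_def power2_eq_square field_simps)
  moreover have "integral {?p..?q} (\<lambda>s::real. infdist s T) \<le> integral {lo..a} (\<lambda>s::real. infdist s T)"
  proof -
    have "integral {lo..?p} (\<lambda>s. infdist s T) + integral {?p..a} (\<lambda>s. infdist s T) = integral {lo..a} (\<lambda>s::real. infdist s T)"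
      using l0 by (intro int_split) (auto simp: l_def field_simps)
    moreover have "integral {?p..?q} (\<lambda>s. infdist s T) + integral {?q..a} (\<lambda>s. infdist s T) = integral {?p..a} (\<lambda>s::real. infdist s T)"
      using l0 by (intro int_split) (auto simp: l_def field_simps)
    ultimately show ?thesis using int_nonneg[of lo ?p T] int_nonneg[of ?q a T] by linarith
  qed
  ultimately show ?thesis unfolding l_def by linarith
qed

lemma int_lower_aux:
  assumes fin: "finite T" and ne: "T \<noteq> {}"
  shows "\<forall>lo a. lo \<le> a \<longrightarrow> card (T \<inter> {lo<..<a}) = c \<longrightarrow>
     (a - lo)\<^sup>2 / (8 * (real c + 1)) \<le> integral {lo..a} (\<lambda>s::real. infdist s T)"
proof (induction c rule: less_induct)
  case (less c)
  show ?case
  proof (intro allI impI)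
    fix lo a :: real
    assume la: "lo \<le> a" and cc: "card (T \<inter> {lo<..<a}) = c"
    show "(a - lo)\<^sup>2 / (8 * (real c + 1)) \<le> integral {lo..a} (\<lambda>s::real. infdist s T)"
    proof (cases "T \<inter> {lo<..<a} = {}")
      case True
      then have "c = 0" using cc by simp
      then show ?thesis using int_lower_base[OF fin ne la True] by simp
    next
      case False
      then obtain t where t: "t \<in> T" "lo < t" "t < a" by auto
      define c1 where "c1 = card (T \<inter> {lo<..<t})"
      define c2 where "c2 = card (T \<inter> {t<..<a})"
      have disj: "(T \<inter> {lo<..<t}) \<inter> (T \<inter> {t<..<a}) = {}" by auto
      have "insert t ((T \<inter> {lo<..<t}) \<union> (T \<inter> {t<..<a})) \<subseteq> T \<inter> {lo<..<a}" using t by auto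
      then have "card (insert t ((T \<inter> {lo<..<t}) \<union> (T \<inter> {t<..<a}))) \<le> c"
        using cc fin by (metis card_mono finite_Int)
      moreover have "card (insert t ((T \<inter> {lo<..<t}) \<union> (T \<inter> {t<..<a}))) = Suc (c1 + c2)"
        unfolding c1_def c2_def using fin disj by (subst card_insert_disjoint) (auto simp: card_Un_disjoint)
      ultimately have c12: "c1 + c2 + 1 \<le> c" by simp
      have i1: "(t - lo)\<^sup>2 / (8 * (real c1 + 1)) \<le> integral {lo..t} (\<lambda>s::real. infdist s T)"
        using less[of c1] c12 t unfolding c1_def by auto
      have i2: "(a - t)\<^sup>2 / (8 * (real c2 + 1)) \<le> integral {t..a} (\<lambda>s::real. infdist s T)"
        using less[of c2] c12 t unfolding c2_def by auto
      have "(a - lo)\<^sup>2 / (8 * (real c + 1)) \<le> (a - lo)\<^sup>2 / (8 * (real c1 + 1) + 8 * (real c2 + 1))"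
        using c12 by (intro divide_left_mono) auto
      also have "\<dots> \<le> (t - lo)\<^sup>2 / (8 * (real c1 + 1)) + (a - t)\<^sup>2 / (8 * (real c2 + 1))"
        using frac_ineq[of "8 * (real c1 + 1)" "8 * (real c2 + 1)" "t - lo" "a - t"] by simp
      also have "\<dots> \<le> integral {lo..a} (\<lambda>s::real. infdist s T)"
        using i1 i2 int_split[of lo t a T] t by linarith
      finally show ?thesis .
    qed
  qed
qed

lemma int_lower:
  assumes fin: "finite T" and ne: "T \<noteq> {}" and a: "0 \<le> a"
  shows "a\<^sup>2 / (8 * (real (card T) + 1)) \<le> integral {0..a} (\<lambda>s::real. infdist s T)"
proof -
  have "card (T \<inter> {0<..<a}) \<le> card T" using fin by (intro card_mono) auto
  then have "a\<^sup>2 / (8 * (real (card T) + 1)) \<le> (a - 0)\<^sup>2 / (8 * (real (card (T \<inter> {0<..<a})) + 1))"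
    by (auto intro!: divide_left_mono mult_pos_pos)
  also have "\<dots> \<le> integral {0..a} (\<lambda>s::real. infdist s T)"
    using int_lower_aux[OF fin ne] a by blast
  finally show ?thesis .
qed

definition bump :: "real \<Rightarrow> real \<Rightarrow> real \<Rightarrow> real" where
  "bump s t a = max 0 (min (a - s) (t - a))"

lemma bump_nonneg: "0 \<le> bump s t a" unfolding bump_def by simp

lemma bump_lip: "\<bar>bump s t a - bump s t b\<bar> \<le> \<bar>a - b\<bar>"
  unfolding bump_def by (auto simp: max_def min_def abs_if)

lemma bump_supp: "bump s t a \<noteq> 0 \<Longrightarrow> s < a \<and> a < t"
  unfolding bump_def by (auto simp: max_def min_def split: if_splits)

lemma bump_refl: "bump s s a = 0"
  unfolding bump_def by (auto simp: max_def min_def)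

lemma bump_in: "s \<le> a \<Longrightarrow> a \<le> t \<Longrightarrow> bump s t a = min (a - s) (t - a)"
  unfolding bump_def by auto

lemma cover_lemma:
  fixes ts :: "nat \<Rightarrow> real"
  assumes "ts 0 \<le> a" "\<forall>i<j. ts i < ts (Suc i)"
  shows "(\<exists>i<j. ts i \<le> a \<and> a \<le> ts (Suc i)) \<or> ts j \<le> a"
  using assms
proof (induction j)
  case 0
  then show ?case by simp
next
  case (Suc j)
  then have "(\<exists>i<j. ts i \<le> a \<and> a \<le> ts (Suc i)) \<or> ts j \<le> a" by simp
  then show ?case
  proof
    assume "\<exists>i<j. ts i \<le> a \<and> a \<le> ts (Suc i)"
    then show ?thesis by (meson less_SucI)
  next
    assume h: "ts j \<le> a"
    show ?thesis
    proof (cases "a \<le> ts (Suc j)")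
      case True
      then show ?thesis using h by blast
    next
      case False
      then show ?thesis by simp
    qed
  qed
qed

lemma incr_lemma:
  fixes ts :: "nat \<Rightarrow> real"
  assumes "\<forall>i<j. ts i < ts (Suc i)" "i < i'" "i' \<le> j"
  shows "ts (Suc i) \<le> ts i'"
  using assms
proof (induction i')
  case 0
  then show ?case by simp
next
  case (Suc i')
  show ?case
  proof (cases "i = i'")
    case True
    then show ?thesis by simp
  next
    case False
    then have "ts (Suc i) \<le> ts i'" using Suc by simp
    also have "ts i' < ts (Suc i')" using Suc by simp
    finally show ?thesis by simp
  qed
qed

context dg begin

lemma es_sum: "finite I \<Longrightarrow> es (\<lambda>x y. \<Sum>i\<in>I. a i x y) = (\<Sum>i\<in>I. es (a i))"
proof (induction I rule: finite_induct)
  case empty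
  show ?case unfolding es_def sum.empty by simp
next
  case (insert i I)
  then show ?case by (simp add: es_add)
qed

lemma threshold:
  fixes f :: "nat \<Rightarrow> real" and g :: real and k :: nat
  assumes fnn: "\<forall>x<n. 0 \<le> f x" and N: "0 < nrm f" and Q: "Qf f \<le> g * nrm f" and g: "0 < g"
    and k1: "1 \<le> k" and kd: "1 / \<delta> < real (k + 1) / 4"
  shows "\<exists>T. finite T \<and> T \<noteq> {} \<and> card T \<le> 2 * k + 1 \<and>
           (\<Sum>x<n. d x * (infdist (f x) T)\<^sup>2) \<le> 4 * g * nrm f"
proof -
  define C where "C = 2 * g * nrm f / real k"
  have Cpos: "0 < C" unfolding C_def using g N k1 by simp
  define M where "M = Max (insert 0 (f ` {..<n}))"
  have M0: "0 \<le> M" unfolding M_def by simp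
  have fM: "x < n \<Longrightarrow> f x \<le> M" for x unfolding M_def by (intro Max_ge) auto
  define e where "e s t = nrm (\<lambda>x. bump s t (f x))" for s t
  have econt: "continuous_on A (e s)" for A s
    unfolding e_def nrm_def bump_def by (intro continuous_intros)
  have erefl: "e s s = 0" for s unfolding e_def nrm_def by (simp add: bump_refl)
  define GT where "GT T \<longleftrightarrow> finite T \<and> T \<noteq> {} \<and> card T \<le> 2 * k + 1 \<and>
           (\<Sum>x<n. d x * (infdist (f x) T)\<^sup>2) \<le> 4 * g * nrm f" for T
  define CH where "CH j ts \<longleftrightarrow> ts 0 = 0 \<and> (\<forall>i<j. ts i < ts (Suc i)) \<and> ts j \<le> M \<and>
           (\<forall>i<j. e (ts i) (ts (Suc i)) = C)" for j and ts :: "nat \<Rightarrow> real"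
  have stage: "j \<le> 2 * k \<Longrightarrow> (\<exists>T. GT T) \<or> (\<exists>ts. CH j ts)" for j
  proof (induction j)
    case 0
    have "CH 0 (\<lambda>_. 0)" unfolding CH_def using M0 by simp
    then show ?case by blast
  next
    case (Suc j)
    then have "(\<exists>T. GT T) \<or> (\<exists>ts. CH j ts)" by simp
    then show ?case
    proof
      assume "\<exists>T. GT T" then show ?thesis by blast
    next
      assume "\<exists>ts. CH j ts"
      then obtain ts where ch: "CH j ts" by blast
      have ts0: "ts 0 = 0" and inc: "\<forall>i<j. ts i < ts (Suc i)" and tsM: "ts j \<le> M"
        and eC: "\<forall>i<j. e (ts i) (ts (Suc i)) = C" using ch unfolding CH_def by auto
      show ?thesis
      proof (cases "e (ts j) M \<le> C")
        case True
        define T where "T = insert M (ts ` {..j})"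
        have finT: "finite T" "T \<noteq> {}" unfolding T_def by auto
        have "card T \<le> Suc (card (ts ` {..j}))" unfolding T_def by (simp add: card_insert_le_m1 card_insert_if)
        also have "card (ts ` {..j}) \<le> Suc j" using card_image_le[of "{..j}" ts] by simp
        finally have cT: "card T \<le> 2 * k + 1" using Suc.prems by simp
        have pw: "(infdist (f x) T)\<^sup>2 \<le> (\<Sum>i<j. (bump (ts i) (ts (Suc i)) (f x))\<^sup>2) + (bump (ts j) M (f x))\<^sup>2"
          if x: "x < n" for x
        proof -
          have fx0: "ts 0 \<le> f x" using ts0 fnn x by simp
          have sumnn: "0 \<le> (\<Sum>i<j. (bump (ts i) (ts (Suc i)) (f x))\<^sup>2)" by (intro sum_nonneg) simp
          from cover_lemma[OF fx0 inc]
          show ?thesis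
          proof
            assume "\<exists>i<j. ts i \<le> f x \<and> f x \<le> ts (Suc i)"
            then obtain i where i: "i < j" "ts i \<le> f x" "f x \<le> ts (Suc i)" by blast
            have "infdist (f x) T \<le> dist (f x) (ts i)" by (rule infdist_le) (use i in \<open>auto simp: T_def\<close>)
            moreover have "infdist (f x) T \<le> dist (f x) (ts (Suc i))" by (rule infdist_le) (use i in \<open>auto simp: T_def\<close>)
            ultimately have "infdist (f x) T \<le> bump (ts i) (ts (Suc i)) (f x)"
              using i by (simp add: bump_in dist_real_def)
            then have "(infdist (f x) T)\<^sup>2 \<le> (bump (ts i) (ts (Suc i)) (f x))\<^sup>2"
              by (intro power_mono infdist_nonneg)
            also have "\<dots> \<le> (\<Sum>i<j. (bump (ts i) (ts (Suc i)) (f x))\<^sup>2)"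
              using i by (intro member_le_sum) auto
            finally show ?thesis using zero_le_power2[of "bump (ts j) M (f x)"] by linarith
          next
            assume h: "ts j \<le> f x"
            have "infdist (f x) T \<le> dist (f x) (ts j)" by (rule infdist_le) (auto simp: T_def)
            moreover have "infdist (f x) T \<le> dist (f x) M" by (rule infdist_le) (auto simp: T_def)
            ultimately have "infdist (f x) T \<le> bump (ts j) M (f x)"
              using h fM[OF x] by (simp add: bump_in dist_real_def)
            then have "(infdist (f x) T)\<^sup>2 \<le> (bump (ts j) M (f x))\<^sup>2"
              by (intro power_mono infdist_nonneg)
            then show ?thesis using sumnn zero_le_power2[of "bump (ts j) M (f x)"] by linarith
          qed
        qed
        have "(\<Sum>x<n. d x * (infdist (f x) T)\<^sup>2) \<le>
              (\<Sum>x<n. d x * ((\<Sum>i<j. (bump (ts i) (ts (Suc i)) (f x))\<^sup>2) + (bump (ts j) M (f x))\<^sup>2))"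
          by (intro sum_mono mult_left_mono pw d_nonneg) simp
        also have "\<dots> = (\<Sum>i<j. e (ts i) (ts (Suc i))) + e (ts j) M"
          unfolding e_def nrm_def sum_distrib_left distrib_left sum.distrib
          by (subst sum.swap) simp
        also have "\<dots> \<le> real j * C + C" using eC True by simp
        also have "\<dots> = (real j + 1) * C" by (simp add: algebra_simps)
        also have "\<dots> \<le> real (2 * k) * C"
        proof (rule mult_right_mono)
          show "real j + 1 \<le> real (2 * k)" using Suc.prems by linarith
        qed (use Cpos in simp)
        also have "\<dots> = 4 * g * nrm f" unfolding C_def using k1 by simp
        finally have "GT T" unfolding GT_def using finT cT by simp
        then show ?thesis by blast
      next
        case False
        then have lt: "C < e (ts j) M" by simp
        obtain t where t: "ts j \<le> t" "t \<le> M" "e (ts j) t = C"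
          using IVT'[of "e (ts j)" "ts j" C M] erefl Cpos lt tsM econt by force
        have tgt: "ts j < t" using t erefl Cpos by (metis order_less_irrefl order_le_less)
        define ts' where "ts' = ts(Suc j := t)"
        have "CH (Suc j) ts'"
          unfolding CH_def ts'_def using ts0 inc eC t tgt by (auto simp: less_Suc_eq)
        then show ?thesis by blast
      qed
    qed
  qed
  from stage[of "2 * k", OF order_refl] show ?thesis
  proof
    assume "\<exists>T. GT T" then show ?thesis unfolding GT_def by blast
  next
    assume "\<exists>ts. CH (2 * k) ts"
    then obtain ts where ch: "CH (2 * k) ts" by blast
    have ts0: "ts 0 = 0" and inc: "\<forall>i<2*k. ts i < ts (Suc i)"
      and eC: "\<forall>i<2*k. e (ts i) (ts (Suc i)) = C" using ch unfolding CH_def by auto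
    define b where "b i x = bump (ts i) (ts (Suc i)) (f x)" for i x
    have nb: "i < 2 * k \<Longrightarrow> nrm (b i) = C" for i using eC unfolding b_def e_def by simp
    have disj: "i < 2 * k \<Longrightarrow> j < 2 * k \<Longrightarrow> i \<noteq> j \<Longrightarrow> b i x = 0 \<or> b j x = 0" for i j x
    proof (rule ccontr)
      assume ij: "i < 2 * k" "j < 2 * k" "i \<noteq> j" and nz: "\<not> (b i x = 0 \<or> b j x = 0)"
      then have si: "ts i < f x \<and> f x < ts (Suc i)" and sj: "ts j < f x \<and> f x < ts (Suc j)"
        using bump_supp unfolding b_def by blast+
      show False
      proof (cases "i < j")
        case True
        then have "ts (Suc i) \<le> ts j" using incr_lemma[OF inc, of i j] ij by simp
        then show False using si sj by simp
      next
        case False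
        then have "j < i" using ij by simp
        then have "ts (Suc j) \<le> ts i" using incr_lemma[OF inc, of j i] ij by simp
        then show False using si sj by simp
      qed
    qed
    have pw: "(\<Sum>i<2*k. (b i x - b i y)\<^sup>2) \<le> 2 * (f x - f y)\<^sup>2" for x y
    proof -
      define Ix where "Ix = {i. i < 2 * k \<and> b i x \<noteq> 0}"
      define Iy where "Iy = {i. i < 2 * k \<and> b i y \<noteq> 0}"
      have cx: "card Ix \<le> 1"
      proof -
        have "\<forall>a\<in>Ix. \<forall>c\<in>Ix. a = c" using disj unfolding Ix_def by blast
        moreover have "finite Ix" unfolding Ix_def by simp
        ultimately show ?thesis using card_le_Suc0_iff_eq[of Ix] by simp
      qed
      have cy: "card Iy \<le> 1"
      proof -
        have "\<forall>a\<in>Iy. \<forall>c\<in>Iy. a = c" using disj unfolding Iy_def by blast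
        moreover have "finite Iy" unfolding Iy_def by simp
        ultimately show ?thesis using card_le_Suc0_iff_eq[of Iy] by simp
      qed
      have "(\<Sum>i<2*k. (b i x - b i y)\<^sup>2) = (\<Sum>i\<in>Ix \<union> Iy. (b i x - b i y)\<^sup>2)"
        by (rule sum.mono_neutral_right) (auto simp: Ix_def Iy_def)
      also have "\<dots> \<le> (\<Sum>i\<in>Ix \<union> Iy. (f x - f y)\<^sup>2)"
      proof (intro sum_mono)
        fix i
        have "\<bar>b i x - b i y\<bar> \<le> \<bar>f x - f y\<bar>" unfolding b_def by (rule bump_lip)
        then show "(b i x - b i y)\<^sup>2 \<le> (f x - f y)\<^sup>2"
          by (metis abs_ge_zero power2_abs power_mono)
      qed
      also have "\<dots> = real (card (Ix \<union> Iy)) * (f x - f y)\<^sup>2" by simp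
      also have "\<dots> \<le> 2 * (f x - f y)\<^sup>2"
      proof (intro mult_right_mono)
        have "card (Ix \<union> Iy) \<le> card Ix + card Iy" by (rule card_Un_le)
        then show "real (card (Ix \<union> Iy)) \<le> 2" using cx cy by linarith
      qed simp
      finally show ?thesis .
    qed
    have esum: "(\<Sum>i<2*k. Qf (b i)) \<le> 2 * Qf f"
    proof -
      have "(\<Sum>i<2*k. Qf (b i)) = es (\<lambda>x y. \<Sum>i<2*k. (b i x - b i y)\<^sup>2)"
        unfolding Qf_def by (rule es_sum[symmetric]) simp
      also have "\<dots> \<le> es (\<lambda>x y. 2 * (f x - f y)\<^sup>2)" by (rule es_mono) (rule pw)
      also have "\<dots> = 2 * Qf f" unfolding Qf_def by (rule es_cmult)
      finally show ?thesis .
    qed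
    define B where "B = {i. i < 2 * k \<and> C < Qf (b i)}"
    define G where "G = {i. i < 2 * k \<and> Qf (b i) \<le> C}"
    have finB: "finite B" unfolding B_def by simp
    have cB: "card B < k"
    proof (cases "B = {}")
      case True
      then show ?thesis using k1 by simp
    next
      case False
      have "real (card B) * C = (\<Sum>i\<in>B. C)" by simp
      also have "\<dots> < (\<Sum>i\<in>B. Qf (b i))"
        using False finB by (intro sum_strict_mono) (auto simp: B_def)
      also have "\<dots> \<le> (\<Sum>i<2*k. Qf (b i))"
        by (intro sum_mono2) (auto simp: B_def Qf_nonneg)
      also have "\<dots> \<le> 2 * g * nrm f" using esum Q by linarith
      also have "\<dots> = real k * C" unfolding C_def using k1 by simp
      finally have "real (card B) < real k" using Cpos by simp
      then show ?thesis by simp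
    qed
    have GB: "G \<union> B = {..<2*k}" "G \<inter> B = {}" unfolding G_def B_def by auto
    have "card G + card B = 2 * k"
      using GB by (metis card_Un_disjoint card_lessThan finite_Un finite_lessThan)
    then have cG: "k + 1 \<le> card G" using cB by simp
    have "real (card G) * (1/2)\<^sup>2 \<le> 1 / \<delta>"
    proof (rule disjoint_bound[where gs = b])
      show "finite G" unfolding G_def by simp
      show "\<And>i j x. i \<in> G \<Longrightarrow> j \<in> G \<Longrightarrow> i \<noteq> j \<Longrightarrow> x < n \<Longrightarrow> b i x = 0 \<or> b j x = 0"
        using disj unfolding G_def by blast
      show "\<And>i. i \<in> G \<Longrightarrow> 0 < nrm (b i)" using nb Cpos unfolding G_def by simp
      show "\<And>i. i \<in> G \<Longrightarrow> 1 / 2 * nrm (b i) \<le> es (\<lambda>x y. b i x * b i y)"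
      proof -
        fix i assume "i \<in> G"
        then have "Qf (b i) \<le> nrm (b i)" using nb unfolding G_def by simp
        then show "1 / 2 * nrm (b i) \<le> es (\<lambda>x y. b i x * b i y)" using Qf_expand[of "b i"] by simp
      qed
    qed simp
    moreover have "real (k + 1) * (1/2)\<^sup>2 \<le> real (card G) * (1/2)\<^sup>2"
      using cG by (intro mult_right_mono) auto
    ultimately have "real (k + 1) / 4 \<le> 1 / \<delta>" by (simp add: power2_eq_square)
    then show ?thesis using kd by simp
  qed
qed

end

context dg begin

lemma main_nonneg:
  fixes f :: "nat \<Rightarrow> real" and g :: real and k :: nat
  assumes fnn: "\<forall>x<n. 0 \<le> f x" and N: "0 < nrm f" and Q: "Qf f \<le> g * nrm f" and g: "0 < g"
    and k1: "1 \<le> k" and kd: "1 / \<delta> < real (k + 1) / 4"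
    and st: "stat_measure n E {x. x < n \<and> 0 < f x} \<le> 1/2"
  shows "cheeger n E \<le> 48 * real (k + 1) * g"
proof -
  obtain T where finT: "finite T" and neT: "T \<noteq> {}" and cT: "card T \<le> 2 * k + 1"
    and err: "(\<Sum>x<n. d x * (infdist (f x) T)\<^sup>2) \<le> 4 * g * nrm f"
    using threshold[OF fnn N Q g k1 kd] by blast
  define D where "D a = infdist a T" for a
  define H where "H a = integral {0..a} (\<lambda>s. infdist s T)" for a
  define h where "h x = H (f x)" for x
  have hnn: "\<forall>x<n. 0 \<le> h x" unfolding h_def H_def by (simp add: int_nonneg)
  have hsupp: "{x. x < n \<and> 0 < h x} \<subseteq> {x. x < n \<and> 0 < f x}"
  proof
    fix x assume "x \<in> {x. x < n \<and> 0 < h x}"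
    then have x: "x < n" "0 < h x" by auto
    have "f x \<noteq> 0"
    proof
      assume "f x = 0"
      then have "h x = 0" unfolding h_def H_def by simp
      then show False using x by simp
    qed
    then show "x \<in> {x. x < n \<and> 0 < f x}" using x fnn by force
  qed
  have sth: "stat_measure n E {x. x < n \<and> 0 < h x} \<le> 1/2"
  proof -
    have "finite {x. x < n \<and> 0 < f x}" by simp
    then show ?thesis using stat_mono[OF hsupp] st by linarith
  qed
  have co: "cheeger n E * (\<Sum>x<n. d x * h x) \<le> es (\<lambda>x y. max 0 (h x - h y))"
    by (rule coarea[OF hnn sth])
  have pw: "max 0 (h x - h y) \<le> \<bar>f x - f y\<bar> * D (f x) + (f x - f y)\<^sup>2" if xy: "x < n" "y < n" for x y
  proof (cases "f y \<le> f x")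
    case True
    have "h x - h y = integral {f y..f x} (\<lambda>s. infdist s T)"
      unfolding h_def H_def using int_split[of 0 "f y" "f x" T] True fnn xy by simp
    also have "\<dots> \<le> (f x - f y) * (infdist (f x) T + (f x - f y))" using True by (rule int_upper)
    also have "\<dots> = \<bar>f x - f y\<bar> * D (f x) + (f x - f y)\<^sup>2"
      using True by (simp add: D_def power2_eq_square algebra_simps)
    finally have "h x - h y \<le> \<bar>f x - f y\<bar> * D (f x) + (f x - f y)\<^sup>2" .
    moreover have "0 \<le> \<bar>f x - f y\<bar> * D (f x) + (f x - f y)\<^sup>2"
      unfolding D_def by (simp add: infdist_nonneg)
    ultimately show ?thesis by simp
  next
    case False
    have "h y - h x = integral {f x..f y} (\<lambda>s. infdist s T)"
      unfolding h_def H_def using int_split[of 0 "f x" "f y" T] False fnn xy by simp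
    then have "h x \<le> h y" using int_nonneg[of "f x" "f y" T] by simp
    moreover have "0 \<le> \<bar>f x - f y\<bar> * D (f x) + (f x - f y)\<^sup>2"
      unfolding D_def by (simp add: infdist_nonneg)
    ultimately show ?thesis by simp
  qed
  have amgm: "\<bar>f x - f y\<bar> * D (f x) \<le> (f x - f y)\<^sup>2 + (D (f x))\<^sup>2 / 4" for x y
  proof -
    have "0 \<le> (\<bar>f x - f y\<bar> - D (f x) / 2)\<^sup>2" by simp
    then show ?thesis by (simp add: power2_eq_square algebra_simps)
  qed
  have "es (\<lambda>x y. max 0 (h x - h y)) \<le> es (\<lambda>x y. 2 * (f x - f y)\<^sup>2 + (1/4) * (D (f x))\<^sup>2)"
  proof (rule es_mono)
    fix x y assume "x < n" "y < n" "E x y"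
    then show "max 0 (h x - h y) \<le> 2 * (f x - f y)\<^sup>2 + (1/4) * (D (f x))\<^sup>2"
      using pw[of x y] amgm[of x y] by simp
  qed
  also have "\<dots> = 2 * Qf f + (1/4) * (\<Sum>x<n. d x * (infdist (f x) T)\<^sup>2)"
    unfolding es_add es_cmult Qf_def es_left D_def ..
  also have "\<dots> \<le> 3 * g * nrm f" using Q err by simp
  finally have rhs: "es (\<lambda>x y. max 0 (h x - h y)) \<le> 3 * g * nrm f" .
  have lb: "nrm f / (16 * real (k + 1)) \<le> (\<Sum>x<n. d x * h x)"
  proof -
    have "nrm f / (16 * real (k + 1)) = (\<Sum>x<n. d x * ((f x)\<^sup>2 / (16 * real (k + 1))))"
      unfolding nrm_def sum_divide_distrib by simp
    also have "\<dots> \<le> (\<Sum>x<n. d x * h x)"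
    proof (intro sum_mono mult_left_mono d_nonneg)
      fix x assume "x \<in> {..<n}"
      then have fx: "0 \<le> f x" using fnn by simp
      have "(f x)\<^sup>2 / (16 * real (k + 1)) \<le> (f x)\<^sup>2 / (8 * (real (card T) + 1))"
        using cT by (intro divide_left_mono) auto
      also have "\<dots> \<le> h x" unfolding h_def H_def by (rule int_lower[OF finT neT fx])
      finally show "(f x)\<^sup>2 / (16 * real (k + 1)) \<le> h x" .
    qed
    finally show ?thesis .
  qed
  show ?thesis
  proof (cases "cheeger n E \<le> 0")
    case True
    then show ?thesis using g by (simp add: order_trans[OF True])
  next
    case False
    then have "cheeger n E * (nrm f / (16 * real (k + 1))) \<le> cheeger n E * (\<Sum>x<n. d x * h x)"
      using lb by (intro mult_left_mono) auto
    also have "\<dots> \<le> 3 * g * nrm f" using co rhs by linarith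
    finally have "cheeger n E * nrm f \<le> (48 * real (k + 1) * g) * nrm f"
      by (simp add: field_simps)
    then show ?thesis using N by simp
  qed
qed

end

context dg begin

lemma gvol_disj: "finite A \<Longrightarrow> finite B \<Longrightarrow> A \<inter> B = {} \<Longrightarrow> gvol n E (A \<union> B) = gvol n E A + gvol n E B"
  unfolding gvol_def by (rule sum.union_disjoint)

lemma posneg_split:
  fixes a b :: real
  shows "(max 0 a - max 0 b)\<^sup>2 + (max 0 (-a) - max 0 (-b))\<^sup>2 \<le> (a - b)\<^sup>2"
  using mult_nonneg_nonpos[of a b] mult_nonneg_nonpos[of b a]
  by (auto simp: max_def power2_eq_square algebra_simps)

lemma median_exists:
  fixes v :: "nat \<Rightarrow> real"
  assumes n0: "0 < n"
  shows "\<exists>m. stat_measure n E {x. x < n \<and> m < v x} \<le> 1/2 \<and> stat_measure n E {x. x < n \<and> v x < m} \<le> 1/2"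
proof -
  define W where "W = v ` {..<n}"
  have finW: "finite W" "W \<noteq> {}" unfolding W_def using n0 by auto
  define P where "P t \<longleftrightarrow> stat_measure n E {x. x < n \<and> t < v x} \<le> 1/2" for t
  have PMax: "P (Max W)"
  proof -
    have e: "{x. x < n \<and> Max W < v x} = {}" using finW unfolding W_def by (auto simp: not_less)
    show ?thesis unfolding P_def e stat_measure_def gvol_def by simp
  qed
  define m where "m = Min {t \<in> W. P t}"
  have MW: "Max W \<in> W" using finW by (intro Max_in) auto
  have MW2: "Max W \<in> {t \<in> W. P t}" using MW PMax by simp
  have finP: "finite {t \<in> W. P t}" "{t \<in> W. P t} \<noteq> {}" using finW(1) MW2 by auto
  have Pm: "P m" unfolding m_def using Min_in[OF finP] by auto
  have minm: "t \<in> W \<Longrightarrow> P t \<Longrightarrow> m \<le> t" for t unfolding m_def using finP by simp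
  have vol0: "0 < real (gvol n E {0..<n})" using vol_pos n0 by simp
  have "stat_measure n E {x. x < n \<and> v x < m} \<le> 1/2"
  proof (cases "{t \<in> W. t < m} = {}")
    case True
    then have e: "{x. x < n \<and> v x < m} = {}" unfolding W_def by auto
    show ?thesis unfolding e stat_measure_def gvol_def by simp
  next
    case False
    define t' where "t' = Max {t \<in> W. t < m}"
    have fin': "finite {t \<in> W. t < m}" using finW by simp
    have t'in: "t' \<in> W" "t' < m" using Max_in[OF fin' False] unfolding t'_def by auto
    have nP: "\<not> P t'" using minm[of t'] t'in by force
    have eqs: "{x. x < n \<and> t' < v x} = {x. x < n \<and> m \<le> v x}"
    proof (rule subset_antisym; rule subsetI)
      fix x assume x: "x \<in> {x. x < n \<and> t' < v x}"
      have "v x \<in> W" using x unfolding W_def by auto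
      moreover have "\<not> (v x < m)"
      proof
        assume "v x < m"
        then have "v x \<le> t'" unfolding t'_def using fin' \<open>v x \<in> W\<close> by (intro Max_ge) auto
        then show False using x by simp
      qed
      ultimately show "x \<in> {x. x < n \<and> m \<le> v x}" using x by simp
    next
      fix x assume "x \<in> {x. x < n \<and> m \<le> v x}"
      then show "x \<in> {x. x < n \<and> t' < v x}" using t'in by auto
    qed
    have un: "{0..<n} = {x. x < n \<and> v x < m} \<union> {x. x < n \<and> m \<le> v x}" by auto
    have "gvol n E {0..<n} = gvol n E {x. x < n \<and> v x < m} + gvol n E {x. x < n \<and> m \<le> v x}"
      by (subst un, rule gvol_disj) auto
    then have "stat_measure n E {x. x < n \<and> v x < m} + stat_measure n E {x. x < n \<and> m \<le> v x} = 1"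
      unfolding stat_measure_def using vol0 by (simp add: add_divide_distrib[symmetric])
    moreover have "1/2 < stat_measure n E {x. x < n \<and> m \<le> v x}" using nP eqs unfolding P_def by simp
    ultimately show ?thesis by simp
  qed
  then show ?thesis using Pm unfolding P_def by blast
qed

lemma eig_bound:
  fixes v :: "nat \<Rightarrow> real" and \<mu> :: real and k :: nat
  assumes eig: "\<forall>x<n. (\<Sum>y<n. if E x y then v y else 0) = \<mu> * d x * v x"
    and mu: "\<mu> < 1" and orth: "(\<Sum>x<n. d x * v x) = 0" and N: "0 < nrm v"
    and k1: "1 \<le> k" and kd: "1 / \<delta> < real (k + 1) / 4" and n0: "0 < n"
  shows "cheeger n E \<le> 96 * real (k + 1) * (1 - \<mu>)"
proof -
  define g where "g = 2 * (1 - \<mu>)"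
  have g: "0 < g" unfolding g_def using mu by simp
  have "es (\<lambda>x y. v x * v y) = (\<Sum>x<n. v x * (\<Sum>y<n. if E x y then v y else 0))"
    unfolding es_def sum_distrib_left by (intro sum.cong refl) auto
  also have "\<dots> = (\<Sum>x<n. \<mu> * (d x * (v x)\<^sup>2))"
    using eig by (intro sum.cong refl) (auto simp: power2_eq_square)
  also have "\<dots> = \<mu> * nrm v" unfolding nrm_def by (simp add: sum_distrib_left)
  finally have Qv: "Qf v = g * nrm v" unfolding Qf_expand g_def by (simp add: algebra_simps)
  obtain m where m1: "stat_measure n E {x. x < n \<and> m < v x} \<le> 1/2"
    and m2: "stat_measure n E {x. x < n \<and> v x < m} \<le> 1/2"
    using median_exists[OF n0] by blast
  define f1 where "f1 x = max 0 (v x - m)" for x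
  define f2 where "f2 x = max 0 (m - v x)" for x
  have s1: "{x. x < n \<and> 0 < f1 x} = {x. x < n \<and> m < v x}" unfolding f1_def by auto
  have s2: "{x. x < n \<and> 0 < f2 x} = {x. x < n \<and> v x < m}" unfolding f2_def by auto
  have QQ: "Qf f1 + Qf f2 \<le> Qf v"
    unfolding Qf_def es_add[symmetric]
  proof (rule es_mono)
    fix x y
    show "(f1 x - f1 y)\<^sup>2 + (f2 x - f2 y)\<^sup>2 \<le> (v x - v y)\<^sup>2"
      using posneg_split[of "v x - m" "v y - m"] unfolding f1_def f2_def by simp
  qed
  have vol0: "0 \<le> (\<Sum>x<n. d x)" by (intro sum_nonneg d_nonneg)
  have NN: "nrm f1 + nrm f2 = nrm v + m\<^sup>2 * (\<Sum>x<n. d x)"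
  proof -
    have "nrm f1 + nrm f2 = (\<Sum>x<n. d x * (v x - m)\<^sup>2)"
      unfolding nrm_def sum.distrib[symmetric]
      by (intro sum.cong refl) (auto simp: f1_def f2_def max_def power2_eq_square algebra_simps)
    also have "\<dots> = (\<Sum>x<n. d x * (v x)\<^sup>2 + m\<^sup>2 * d x - 2 * m * (d x * v x))"
      by (intro sum.cong refl) (simp add: power2_eq_square algebra_simps)
    also have "\<dots> = nrm v + m\<^sup>2 * (\<Sum>x<n. d x) - 2 * m * (\<Sum>x<n. d x * v x)"
      unfolding nrm_def by (simp add: sum.distrib sum_subtractf sum_distrib_left)
    finally show ?thesis using orth by simp
  qed
  have Nle: "nrm v \<le> nrm f1 + nrm f2" using NN vol0 by simp
  have k1': "1 \<le> k" by (rule k1)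
  have f1nn: "\<forall>x<n. 0 \<le> f1 x" and f2nn: "\<forall>x<n. 0 \<le> f2 x" unfolding f1_def f2_def by auto
  have "\<exists>f. (\<forall>x<n. 0 \<le> f x) \<and> 0 < nrm f \<and> Qf f \<le> g * nrm f \<and> stat_measure n E {x. x < n \<and> 0 < f x} \<le> 1/2"
  proof (cases "0 < nrm f1 \<and> Qf f1 \<le> g * nrm f1")
    case True
    then show ?thesis using f1nn m1 s1 by metis
  next
    case F1: False
    show ?thesis
    proof (cases "0 < nrm f2 \<and> Qf f2 \<le> g * nrm f2")
      case True
      then show ?thesis using f2nn m2 s2 by metis
    next
      case F2: False
      have q1: "0 \<le> Qf f1" "0 \<le> Qf f2" by (rule Qf_nonneg)+
      have n1: "0 \<le> nrm f1" "0 \<le> nrm f2" by (rule nrm_nonneg)+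
      have False
      proof (cases "nrm f1 = 0")
        case True
        then have "Qf f2 \<le> g * nrm f2" using QQ Qv Nle q1 g by (smt (verit) mult_left_mono)
        moreover have "0 < nrm f2" using True Nle N by simp
        ultimately show False using F2 by simp
      next
        case nf1: False
        show False
        proof (cases "nrm f2 = 0")
          case True
          then have "Qf f1 \<le> g * nrm f1" using QQ Qv Nle q1 g by (smt (verit) mult_left_mono)
          moreover have "0 < nrm f1" using True Nle N by simp
          ultimately show False using F1 by simp
        next
          case False
          then have "g * nrm f1 < Qf f1" "g * nrm f2 < Qf f2" using F1 F2 nf1 n1 by auto
          then have "g * (nrm f1 + nrm f2) < Qf v" using QQ by (simp add: algebra_simps)
          moreover have "g * nrm v \<le> g * (nrm f1 + nrm f2)" using Nle g by simp
          ultimately show False using Qv by simp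
        qed
      qed
      then show ?thesis ..
    qed
  qed
  then obtain f where "\<forall>x<n. 0 \<le> f x" "0 < nrm f" "Qf f \<le> g * nrm f"
    "stat_measure n E {x. x < n \<and> 0 < f x} \<le> 1/2" by blast
  from main_nonneg[OF this(1,2,3) g k1 kd this(4)]
  have "cheeger n E \<le> 48 * real (k + 1) * g" .
  also have "48 * real (k + 1) * g = 96 * real (k + 1) * (1 - \<mu>)" unfolding g_def by (simp add: algebra_simps)
  finally show ?thesis .
qed

end

lemma kernel_dim_le1:
  fixes B :: "real mat" and w :: "real Matrix.vec"
  assumes B: "B \<in> carrier_mat n n" and w: "w \<in> mat_kernel B"
    and all: "\<And>u. u \<in> mat_kernel B \<Longrightarrow> \<exists>c. u = c \<cdot>\<^sub>v w"
  shows "kernel_dim B \<le> 1"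
proof -
  interpret K: kernel n n B by unfold_locales (rule B)
  have sp: "K.Ker.span {w} = mat_kernel B"
  proof
    show "K.Ker.span {w} \<subseteq> mat_kernel B" using w by (intro K.Ker.span_is_subset2) auto
    show "mat_kernel B \<subseteq> K.Ker.span {w}"
    proof
      fix u assume u: "u \<in> mat_kernel B"
      obtain c where c: "u = c \<cdot>\<^sub>v w" using all[OF u] by blast
      show "u \<in> K.Ker.span {w}"
        unfolding K.Ker.span_def
      proof (intro CollectI exI conjI)
        show "u = K.Ker.lincomb (\<lambda>_. c) {w}" 
          unfolding K.Ker.lincomb_def c using w by simp
      qed (auto simp: class_field_def)
    qed
  qed
  have "K.Ker.dim \<le> card {w}"
    by (rule K.Ker.gen_ge_dim) (use w sp in auto)
  then show ?thesis by simp
qed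

context dg begin

lemma WM_carrier: "walk_matrix n E \<in> carrier_mat n n" unfolding walk_matrix_def by simp

lemma WM_index: "i < n \<Longrightarrow> j < n \<Longrightarrow> walk_matrix n E $$ (i,j) = (if E i j then 1 / d i else 0)"
  unfolding walk_matrix_def d_def by simp

lemma WM_mult:
  assumes v: "v \<in> carrier_vec n" and i: "i < n"
  shows "vec_index (walk_matrix n E *\<^sub>v v) i = (\<Sum>j<n. if E i j then vec_index v j else 0) / d i"
proof -
  have "vec_index (walk_matrix n E *\<^sub>v v) i = (\<Sum>j\<in>{0..<n}. walk_matrix n E $$ (i,j) * vec_index v j)"
    using v i WM_carrier unfolding index_mult_mat_vec[of i "walk_matrix n E" v] by (auto simp: scalar_prod_def)
  also have "\<dots> = (\<Sum>j<n. (if E i j then vec_index v j else 0) / d i)"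
    using i by (intro sum.cong) (auto simp: WM_index)
  finally show ?thesis by (simp add: sum_divide_distrib)
qed

lemma WMC_mult:
  assumes v: "v \<in> carrier_vec n" and i: "i < n"
  shows "vec_index (map_mat complex_of_real (walk_matrix n E) *\<^sub>v v) i
     = (\<Sum>j<n. if E i j then vec_index v j else 0) / complex_of_real (d i)"
proof -
  have "vec_index (map_mat complex_of_real (walk_matrix n E) *\<^sub>v v) i
      = (\<Sum>j\<in>{0..<n}. complex_of_real (walk_matrix n E $$ (i,j)) * vec_index v j)"
    using v i WM_carrier unfolding index_mult_mat_vec[of i "map_mat complex_of_real (walk_matrix n E)" v]
    by (auto simp: scalar_prod_def)
  also have "\<dots> = (\<Sum>j<n. (if E i j then vec_index v j else 0) / complex_of_real (d i))"
    using i by (intro sum.cong) (auto simp: WM_index)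
  finally show ?thesis by (simp add: sum_divide_distrib)
qed

lemma eig_real:
  assumes ev: "eigenvector (walk_matrix n E) v r"
  shows "v \<in> carrier_vec n" "\<forall>x<n. (\<Sum>y<n. if E x y then vec_index v y else 0) = r * d x * vec_index v x"
    "0 < nrm (vec_index v)"
proof -
  have v: "v \<in> carrier_vec n" and v0: "v \<noteq> 0\<^sub>v n" and eq: "walk_matrix n E *\<^sub>v v = r \<cdot>\<^sub>v v"
    using ev WM_carrier unfolding eigenvector_def by auto
  show "v \<in> carrier_vec n" by (rule v)
  show "\<forall>x<n. (\<Sum>y<n. if E x y then vec_index v y else 0) = r * d x * vec_index v x"
  proof (intro allI impI)
    fix x assume x: "x < n"
    have "(\<Sum>y<n. if E x y then vec_index v y else 0) / d x = r * vec_index v x"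
      using WM_mult[OF v x] arg_cong[OF eq, of "\<lambda>w. vec_index w x"] v x by simp
    then show "(\<Sum>y<n. if E x y then vec_index v y else 0) = r * d x * vec_index v x"
      using d_pos[OF x] by (simp add: field_simps)
  qed
  obtain x where x: "x < n" "vec_index v x \<noteq> 0"
  proof (rule ccontr)
    assume "\<not> thesis"
    then have "\<forall>x<n. vec_index v x = 0" using that by blast
    then have "v = 0\<^sub>v n" using v by (intro eq_vecI) auto
    then show False using v0 by simp
  qed
  show "0 < nrm (vec_index v)" unfolding nrm_def
    using x d_pos d_nonneg by (intro sum_pos2[of _ x]) auto
qed

lemma eig_le1:
  fixes u :: "nat \<Rightarrow> real"
  assumes eq: "\<forall>x<n. (\<Sum>y<n. if E x y then u y else 0) = r * d x * u x" and N: "0 < nrm u"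
  shows "r \<le> 1"
proof -
  have n0: "0 < n" using N unfolding nrm_def by (cases n) auto
  define M where "M = Max ((\<lambda>x. \<bar>u x\<bar>) ` {..<n})"
  have Mge: "x < n \<Longrightarrow> \<bar>u x\<bar> \<le> M" for x unfolding M_def by (intro Max_ge) auto
  have "M \<in> (\<lambda>x. \<bar>u x\<bar>) ` {..<n}" unfolding M_def using n0 by (intro Max_in) auto
  then obtain z where z: "z < n" "\<bar>u z\<bar> = M" by auto
  have Mpos: "0 < M"
  proof (rule ccontr)
    assume "\<not> 0 < M"
    then have "\<forall>x<n. u x = 0" using Mge by (meson abs_le_zero_iff not_less order_trans)
    then have "nrm u = 0" unfolding nrm_def by simp
    then show False using N by simp
  qed
  have "\<bar>r\<bar> * d z * M = \<bar>\<Sum>y<n. if E z y then u y else 0\<bar>"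
    using eq z d_nonneg[of z] by (simp add: abs_mult)
  also have "\<dots> \<le> (\<Sum>y<n. \<bar>if E z y then u y else 0\<bar>)" by (rule sum_abs)
  also have "\<dots> \<le> (\<Sum>y<n. if E z y then M else 0)" by (intro sum_mono) (auto simp: Mge)
  also have "\<dots> = M * d z" by (rule deg_sum)
  finally have "\<bar>r\<bar> * (d z * M) \<le> 1 * (d z * M)" by (simp add: algebra_simps)
  then have "\<bar>r\<bar> \<le> 1" using d_pos[OF z(1)] Mpos by (simp add: mult_le_cancel_right)
  then show ?thesis by simp
qed

lemma eig_orth:
  fixes u :: "nat \<Rightarrow> real"
  assumes eq: "\<forall>x<n. (\<Sum>y<n. if E x y then u y else 0) = r * d x * u x" and r: "r \<noteq> 1"
  shows "(\<Sum>x<n. d x * u x) = 0"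
proof -
  have "(\<Sum>x<n. d x * u x) = es (\<lambda>x y. u y)" by (rule es_right[symmetric])
  also have "\<dots> = (\<Sum>x<n. r * (d x * u x))" unfolding es_def using eq by (intro sum.cong refl) simp
  also have "\<dots> = r * (\<Sum>x<n. d x * u x)" by (simp add: sum_distrib_left)
  finally show ?thesis using r by (metis mult_cancel_right1)
qed

end

context dg begin

lemma complex_eig_real:
  assumes ev: "eigenvector (map_mat complex_of_real (walk_matrix n E)) w a"
  shows "a \<in> \<real>"
proof -
  have C: "map_mat complex_of_real (walk_matrix n E) \<in> carrier_mat n n" using WM_carrier by simp
  have w: "w \<in> carrier_vec n" and w0: "w \<noteq> 0\<^sub>v n" and eq0: "map_mat complex_of_real (walk_matrix n E) *\<^sub>v w = a \<cdot>\<^sub>v w"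
    using ev C unfolding eigenvector_def by auto
  have eq: "(\<Sum>y<n. if E x y then vec_index w y else 0) = a * complex_of_real (d x) * vec_index w x" if x: "x < n" for x
  proof -
    have "(\<Sum>y<n. if E x y then vec_index w y else 0) / complex_of_real (d x) = a * vec_index w x"
      using WMC_mult[OF w x] arg_cong[OF eq0, of "\<lambda>v. vec_index v x"] w x by simp
    then show ?thesis using d_pos[OF x] by (simp add: field_simps)
  qed
  define S where "S = (\<Sum>x<n. \<Sum>y<n. if E x y then cnj (vec_index w x) * vec_index w y else 0)"
  define R where "R = (\<Sum>x<n. d x * (cmod (vec_index w x))\<^sup>2)"
  have S1: "S = a * complex_of_real R"
  proof -
    have "S = (\<Sum>x<n. cnj (vec_index w x) * (\<Sum>y<n. if E x y then vec_index w y else 0))"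
      unfolding S_def sum_distrib_left by (intro sum.cong refl) auto
    also have "\<dots> = (\<Sum>x<n. a * (complex_of_real (d x) * (cnj (vec_index w x) * vec_index w x)))"
      by (intro sum.cong refl) (simp add: eq)
    also have "\<dots> = (\<Sum>x<n. a * complex_of_real (d x * (cmod (vec_index w x))\<^sup>2))"
    proof (intro sum.cong refl)
      fix x
      have cz: "\<And>z. cnj z * z = complex_of_real ((cmod z)\<^sup>2)" by (metis complex_norm_square mult.commute)
      show "a * (complex_of_real (d x) * (cnj (vec_index w x) * vec_index w x)) = a * complex_of_real (d x * (cmod (vec_index w x))\<^sup>2)"
        by (simp only: cz of_real_mult)
    qed
    also have "\<dots> = a * complex_of_real R" unfolding R_def by (simp add: sum_distrib_left)
    finally show ?thesis .
  qed
  have S2: "cnj S = S"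
  proof -
    have "cnj S = (\<Sum>x<n. \<Sum>y<n. if E x y then vec_index w x * cnj (vec_index w y) else 0)"
      unfolding S_def cnj_sum by (intro sum.cong refl) auto
    also have "\<dots> = (\<Sum>y<n. \<Sum>x<n. if E x y then vec_index w x * cnj (vec_index w y) else 0)"
      by (rule sum.swap)
    also have "\<dots> = S" unfolding S_def
      by (intro sum.cong refl) (auto dest: Esym simp: mult.commute)
    finally show ?thesis .
  qed
  obtain x where x: "x < n" "vec_index w x \<noteq> 0"
  proof (rule ccontr)
    assume "\<not> thesis"
    then have "\<forall>x<n. vec_index w x = 0" using that by blast
    then have "w = 0\<^sub>v n" using w by (intro eq_vecI) auto
    then show False using w0 by simp
  qed
  have Rpos: "0 < R" unfolding R_def
    using x d_pos d_nonneg by (intro sum_pos2[of _ x]) auto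
  have "cnj a * complex_of_real R = a * complex_of_real R"
    using S1 S2 by (metis complex_cnj_complex_of_real complex_cnj_mult)
  then have "cnj a = a" using Rpos by simp
  then show ?thesis by (simp add: Reals_cnj_iff)
qed

lemma char_split: "\<exists>rs. char_poly (walk_matrix n E) = (\<Prod>r\<leftarrow>rs. [:-r, 1:]) \<and> length rs = n"
proof -
  let ?C = "map_mat complex_of_real (walk_matrix n E)"
  have C: "?C \<in> carrier_mat n n" using WM_carrier by simp
  obtain as where cpC: "char_poly ?C = (\<Prod>a\<leftarrow>as. [:-a, 1:])" and len: "length as = n"
    using char_poly_factorized[OF C] by blast
  have real: "a \<in> \<real>" if a: "a \<in> set as" for a
  proof -
    have "poly (char_poly ?C) a = 0" unfolding cpC using a by (rule linear_poly_root)
    then have "eigenvalue ?C a" using eigenvalue_root_char_poly[OF C] by simp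
    then obtain w where "eigenvector ?C w a" unfolding eigenvalue_def by blast
    then show ?thesis by (rule complex_eig_real)
  qed
  define rs where "rs = map Re as"
  have asrs: "as = map complex_of_real rs" unfolding rs_def
    by (simp add: map_idI of_real_Re real)
  interpret R: map_poly_inj_idom_hom "complex_of_real" ..
  have "map_poly complex_of_real (char_poly (walk_matrix n E)) = char_poly ?C"
    by (rule of_real_hom.char_poly_hom[OF WM_carrier, symmetric])
  also have "\<dots> = (\<Prod>r\<leftarrow>rs. [:- complex_of_real r, 1:])" unfolding cpC asrs by (simp add: o_def)
  also have "\<dots> = map_poly complex_of_real (\<Prod>r\<leftarrow>rs. [:-r, 1:])"
    by (simp add: R.hom_prod_list o_def)
  finally have "char_poly (walk_matrix n E) = (\<Prod>r\<leftarrow>rs. [:-r, 1:])" by simp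
  moreover have "length rs = n" using len unfolding rs_def by simp
  ultimately show ?thesis by blast
qed

end

context dg begin

lemma closed_cheeger:
  assumes X: "X \<subseteq> {0..<n}" "X \<noteq> {}" "X \<noteq> {0..<n}"
    and cl: "\<And>x y. x \<in> X \<Longrightarrow> y < n \<Longrightarrow> E x y \<Longrightarrow> y \<in> X"
  shows "cheeger n E \<le> 0"
proof -
  define Y where "Y = {0..<n} - X"
  have Y: "Y \<subseteq> {0..<n}" "Y \<noteq> {}" using X unfolding Y_def by auto
  have clY: "y \<in> Y" if "x \<in> Y" "y < n" "E x y" for x y
  proof (rule ccontr)
    assume "y \<notin> Y"
    then have "y \<in> X" using that unfolding Y_def by auto
    then have "x \<in> X" using cl[of y x] that Esym unfolding Y_def by auto
    then show False using that unfolding Y_def by auto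
  qed
  have n0: "0 < n" using X by auto
  have vol0: "0 < real (gvol n E {0..<n})" using vol_pos n0 by simp
  have un: "gvol n E {0..<n} = gvol n E X + gvol n E Y"
  proof -
    have e: "{0..<n} = X \<union> Y" using X unfolding Y_def by auto
    have fX: "finite X" using X(1) by (rule finite_subset) simp
    have fY: "finite Y" using Y(1) by (rule finite_subset) simp
    have dj: "X \<inter> Y = {}" unfolding Y_def by auto
    show ?thesis unfolding e by (rule gvol_disj[OF fX fY dj])
  qed
  have "stat_measure n E X + stat_measure n E Y = 1"
    unfolding stat_measure_def using un vol0 by (simp add: add_divide_distrib[symmetric])
  then obtain Z where Z: "Z \<subseteq> {0..<n}" "Z \<noteq> {}" "stat_measure n E Z \<le> 1/2"
    and clZ: "\<And>x y. x \<in> Z \<Longrightarrow> y < n \<Longrightarrow> E x y \<Longrightarrow> y \<in> Z"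
  proof (cases "stat_measure n E X \<le> 1/2")
    case True
    then show ?thesis using that[of X] X cl by blast
  next
    case False
    then have "stat_measure n E Y \<le> 1/2" using \<open>stat_measure n E X + stat_measure n E Y = 1\<close> by simp
    then show ?thesis using that[of Y] Y clY by blast
  qed
  have "gboundary n E Z = {}" unfolding gboundary_def using clZ by auto
  then have "cheeger n E * real (gvol n E Z) \<le> 0" using cheeger_le[OF Z] by simp
  moreover have "0 < real (gvol n E Z)"
  proof -
    obtain x where "x \<in> Z" using Z by auto
    then show ?thesis unfolding gvol_eq using Z d_pos
      by (intro sum_pos2[of _ x]) (auto intro: finite_subset d_nonneg)
  qed
  ultimately show ?thesis by (simp add: mult_le_0_iff)
qed

lemma harmonic_const:
  fixes u :: "nat \<Rightarrow> real"
  assumes ch: "0 < cheeger n E" and n0: "0 < n"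
    and harm: "\<forall>x<n. (\<Sum>y<n. if E x y then u y else 0) = d x * u x"
  shows "\<forall>x<n. u x = u 0"
proof -
  define M where "M = Max (u ` {..<n})"
  have Mge: "x < n \<Longrightarrow> u x \<le> M" for x unfolding M_def by (intro Max_ge) auto
  have "M \<in> u ` {..<n}" unfolding M_def using n0 by (intro Max_in) auto
  then obtain z where z: "z < n" "u z = M" by auto
  define S where "S = {x. x < n \<and> u x = M}"
  have cl: "y \<in> S" if xy: "x \<in> S" "y < n" "E x y" for x y
  proof -
    have x: "x < n" "u x = M" using xy unfolding S_def by auto
    have "(\<Sum>y<n. if E x y then M - u y else 0) = (\<Sum>y<n. if E x y then M else 0) - (\<Sum>y<n. if E x y then u y else 0)"
      unfolding sum_subtractf[symmetric] by (intro sum.cong refl) auto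
    also have "\<dots> = 0"
    proof -
      have h: "(\<Sum>y<n. if E x y then u y else 0) = d x * u x" using harm x(1) by blast
      show ?thesis unfolding h deg_sum x(2) by simp
    qed
    finally have "(\<Sum>y<n. if E x y then M - u y else 0) = 0" .
    moreover have "\<forall>y\<in>{..<n}. 0 \<le> (if E x y then M - u y else 0)" using Mge by auto
    ultimately have "\<forall>y\<in>{..<n}. (if E x y then M - u y else 0) = 0"
      using sum_nonneg_eq_0_iff[of "{..<n}" "\<lambda>y. if E x y then M - u y else 0"] by simp
    then have "(if E x y then M - u y else 0) = 0" using xy(2) by simp
    then have "M - u y = 0" using xy(3) by simp
    then show ?thesis using xy unfolding S_def by auto
  qed
  have "S = {0..<n}"
  proof (rule ccontr)
    assume ne: "S \<noteq> {0..<n}"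
    have sub: "S \<subseteq> {0..<n}" unfolding S_def by auto
    have ne1: "S \<noteq> {}" using z unfolding S_def by auto
    have "cheeger n E \<le> 0" by (rule closed_cheeger[OF sub ne1 ne cl])
    then show False using ch by simp
  qed
  have all: "u x = M" if "x < n" for x
  proof -
    have "x \<in> S" using \<open>S = {0..<n}\<close> that by simp
    then show ?thesis unfolding S_def by simp
  qed
  then show ?thesis using n0 by simp
qed

lemma CM_mult:
  assumes v: "v \<in> carrier_vec n" and i: "i < n"
  shows "vec_index (char_matrix (walk_matrix n E) 1 *\<^sub>v v) i = (\<Sum>j<n. if E i j then vec_index v j else 0) / d i - vec_index v i"
proof -
  have C: "char_matrix (walk_matrix n E) 1 \<in> carrier_mat n n" using WM_carrier by simp
  have "vec_index (char_matrix (walk_matrix n E) 1 *\<^sub>v v) i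
      = (\<Sum>j\<in>{0..<n}. (walk_matrix n E $$ (i,j) - (if i = j then 1 else 0)) * vec_index v j)"
    using v i WM_carrier C unfolding index_mult_mat_vec[of i "char_matrix (walk_matrix n E) 1" v]
    by (auto simp: scalar_prod_def char_matrix_def intro!: sum.cong)
  also have "\<dots> = (\<Sum>j<n. (if E i j then vec_index v j else 0) / d i) - (\<Sum>j<n. if i = j then vec_index v j else 0)"
    unfolding sum_subtractf[symmetric] using i by (intro sum.cong) (auto simp: WM_index algebra_simps)
  also have "(\<Sum>j<n. if i = j then vec_index v j else 0) = vec_index v i" using i by simp
  finally show ?thesis by (simp add: sum_divide_distrib)
qed

lemma kernel_small:
  assumes ch: "0 < cheeger n E" and n0: "0 < n"
  shows "kernel_dim (char_matrix (walk_matrix n E) 1 ^\<^sub>m 2) \<le> 1"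
proof -
  define C where "C = char_matrix (walk_matrix n E) 1"
  have C: "C \<in> carrier_mat n n" unfolding C_def using WM_carrier by simp
  have BC: "C ^\<^sub>m 2 = C * C" using C by (simp add: numeral_2_eq_2)
  have B: "C ^\<^sub>m 2 \<in> carrier_mat n n" unfolding BC using C by simp
  have Bv: "v \<in> carrier_vec n \<Longrightarrow> C ^\<^sub>m 2 *\<^sub>v v = C *\<^sub>v (C *\<^sub>v v)" for v
    unfolding BC using C by simp
  have C1: "C *\<^sub>v (Matrix.vec n (\<lambda>_. 1)) = 0\<^sub>v n"
  proof (rule eq_vecI)
    fix i assume "i < dim_vec (0\<^sub>v n)"
    then have i: "i < n" by simp
    have s1: "(\<Sum>j<n. if E i j then vec_index (Matrix.vec n (\<lambda>_. 1)) j else 0) = (\<Sum>j<n. if E i j then (1::real) else 0)"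
      by (intro sum.cong refl) simp
    have "vec_index (C *\<^sub>v (Matrix.vec n (\<lambda>_. 1))) i = (1 * d i) / d i - 1"
    proof -
      have cv: "Matrix.vec n (\<lambda>_. 1) \<in> carrier_vec n" by simp
      show ?thesis unfolding C_def CM_mult[OF cv i] s1 deg_sum using i by simp
    qed
    also have "\<dots> = 0" using d_pos[OF i] by simp
    finally show "vec_index (C *\<^sub>v (Matrix.vec n (\<lambda>_. 1))) i = vec_index (0\<^sub>v n) i" using i by simp
  qed (use C in simp)
  have w1: "(Matrix.vec n (\<lambda>_. 1)) \<in> mat_kernel (C ^\<^sub>m 2)"
    using B Bv[of "(Matrix.vec n (\<lambda>_. 1))"] C1 C by (intro mat_kernelI[of _ n n]) auto
  have all: "\<exists>c. u = c \<cdot>\<^sub>v (Matrix.vec n (\<lambda>_. 1))" if u: "u \<in> mat_kernel (C ^\<^sub>m 2)" for u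
  proof -
    have uc: "u \<in> carrier_vec n" and Bu: "C ^\<^sub>m 2 *\<^sub>v u = 0\<^sub>v n" using mat_kernelD[OF B u] by auto
    define w where "w = C *\<^sub>v u"
    have wc: "w \<in> carrier_vec n" unfolding w_def using C uc by simp
    have Cw: "C *\<^sub>v w = 0\<^sub>v n" using Bu Bv[OF uc] unfolding w_def by simp
    have wi: "vec_index w i = (\<Sum>j<n. if E i j then vec_index u j else 0) / d i - vec_index u i" if "i < n" for i
      unfolding w_def C_def by (rule CM_mult[OF uc that])
    have harmw: "\<forall>x<n. (\<Sum>y<n. if E x y then vec_index w y else 0) = d x * vec_index w x"
    proof (intro allI impI)
      fix x assume x: "x < n"
      have "vec_index (C *\<^sub>v w) x = 0" using Cw x by simp
      then have "(\<Sum>j<n. if E x j then vec_index w j else 0) / d x - vec_index w x = 0"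
        using CM_mult[OF wc x] unfolding C_def by simp
      then show "(\<Sum>y<n. if E x y then vec_index w y else 0) = d x * vec_index w x"
        using d_pos[OF x] by (simp add: field_simps)
    qed
    have wconst: "\<forall>x<n. vec_index w x = vec_index w 0" by (rule harmonic_const[OF ch n0 harmw])
    have "(\<Sum>x<n. d x * vec_index w x) = (\<Sum>x<n. (\<Sum>j<n. if E x j then vec_index u j else 0) - d x * vec_index u x)"
    proof (intro sum.cong refl)
      fix x assume "x \<in> {..<n}"
      then have x: "x < n" by simp
      show "d x * vec_index w x = (\<Sum>j<n. if E x j then vec_index u j else 0) - d x * vec_index u x"
      proof -
        have "d x \<noteq> 0" using d_pos[OF x] by simp
        then show ?thesis unfolding wi[OF x] by (simp add: right_diff_distrib)
      qed
    qed
    also have "\<dots> = es (\<lambda>x y. vec_index u y) - (\<Sum>x<n. d x * vec_index u x)"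
      by (simp only: sum_subtractf es_def)
    also have "\<dots> = 0" by (simp add: es_right)
    finally have "(\<Sum>x<n. d x * vec_index w x) = 0" .
    moreover have "(\<Sum>x<n. d x * vec_index w x) = vec_index w 0 * (\<Sum>x<n. d x)"
    proof -
      have "(\<Sum>x<n. d x * vec_index w x) = (\<Sum>x<n. vec_index w 0 * d x)"
      proof (intro sum.cong refl)
        fix x assume "x \<in> {..<n}"
        then have "vec_index w x = vec_index w 0" using wconst by blast
        then show "d x * vec_index w x = vec_index w 0 * d x" by simp
      qed
      then show ?thesis by (simp only: sum_distrib_left)
    qed
    moreover have "0 < (\<Sum>x<n. d x)" using d_pos n0 by (intro sum_pos) auto
    ultimately have "vec_index w 0 * (\<Sum>x<n. d x) = 0" "0 < (\<Sum>x<n. d x)" by linarith+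
    then have w00: "vec_index w 0 = 0" by simp
    have harmu: "\<forall>x<n. (\<Sum>y<n. if E x y then vec_index u y else 0) = d x * vec_index u x"
    proof (intro allI impI)
      fix x assume x: "x < n"
      have "vec_index w x = vec_index w 0" using wconst x by blast
      then have "vec_index w x = 0" using w00 by simp
      then show "(\<Sum>y<n. if E x y then vec_index u y else 0) = d x * vec_index u x"
        using wi[OF x] d_pos[OF x] by (simp add: field_simps)
    qed
    have uconst: "\<forall>x<n. vec_index u x = vec_index u 0" by (rule harmonic_const[OF ch n0 harmu])
    have "u = vec_index u 0 \<cdot>\<^sub>v (Matrix.vec n (\<lambda>_. 1))"
    proof (rule eq_vecI)
      fix i assume "i < dim_vec (vec_index u 0 \<cdot>\<^sub>v Matrix.vec n (\<lambda>_. 1))"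
      then have i: "i < n" by simp
      show "vec_index u i = vec_index (vec_index u 0 \<cdot>\<^sub>v Matrix.vec n (\<lambda>_. 1)) i"
      proof -
        have "vec_index u i = vec_index u 0" using uconst i by blast
        then show ?thesis using i by simp
      qed
    qed (use uc in simp)
    then show ?thesis by blast
  qed
  show ?thesis unfolding C_def[symmetric] by (rule kernel_dim_le1[OF B w1 all])
qed

lemma count_proots_jordan:
  fixes nas :: "(nat \<times> real) list"
  shows "count (proots (\<Prod>(m, a)\<leftarrow>nas. [:- a, 1:] ^ m)) c = sum_list (map fst [(m, e)\<leftarrow>nas. e = c])"
proof (induction nas)
  case Nil
  then show ?case by simp
next
  case (Cons p nas)
  obtain m a where p: "p = (m, a)" by (cases p)
  have nz1: "[:- a, 1:] ^ m \<noteq> 0" by simp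
  have nz2: "(\<Prod>(m, a)\<leftarrow>nas. [:- a, 1:] ^ m) \<noteq> (0 :: real poly)"
    by (induction nas) auto
  have "count (proots ([:- a, 1:] ^ m * (\<Prod>(m, a)\<leftarrow>nas. [:- a, 1:] ^ m))) c
      = count (proots ([:- a, 1:] ^ m)) c + count (proots (\<Prod>(m, a)\<leftarrow>nas. [:- a, 1:] ^ m)) c"
    using nz1 nz2 by (simp add: proots_mult)
  also have "count (proots ([:- a, 1:] ^ m)) c = (if a = c then m else 0)"
    by (simp add: proots_power)
  finally show ?case using Cons p by simp
qed

lemma sum_min2: "min 2 (sum_list xs) \<le> sum_list (map (min (2::nat)) xs)"
  by (induction xs) auto

end

lemma count_two:
  assumes "i < length xs" "j < length xs" "i \<noteq> j" "xs ! i = a" "xs ! j = a"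
  shows "2 \<le> count (mset xs) a"
proof -
  have "count_list xs a = length (filter (\<lambda>y. a = y) xs)" by (induction xs) auto
  then have "count (mset xs) a = length (filter (\<lambda>y. a = y) xs)" by (simp add: count_mset)
  also have "\<dots> = card {k. k < length xs \<and> a = xs ! k}" by (rule length_filter_conv_card)
  finally have c: "count (mset xs) a = card {k. k < length xs \<and> a = xs ! k}" .
  have "{i, j} \<subseteq> {k. k < length xs \<and> a = xs ! k}" using assms by auto
  then have "card {i, j} \<le> card {k. k < length xs \<and> a = xs ! k}" by (intro card_mono) auto
  then show ?thesis using c assms(3) by simp
qed

lemma sum_list_singletons: "sum_list (map (\<lambda>x. {#x#}) xs) = mset xs"
  by (induction xs) auto

context dg begin

lemma final:
  fixes k :: nat
  assumes n1: "1 \<le> n" and k1: "1 \<le> k" and kd: "1 / \<delta> < real (k + 1) / 4"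
  shows "cheeger n E \<le> 96 * real (k + 1) * spectral_gap n E"
proof -
  let ?A = "walk_matrix n E"
  have n0: "0 < n" using n1 by simp
  have n2: "2 \<le> n"
  proof (rule ccontr)
    assume "\<not> 2 \<le> n"
    then have n_1: "n = 1" using n1 by simp
    have "{u. u < n \<and> E 0 u} = {}" using n_1 Eirr by auto
    then have "gdeg n E 0 = 0" unfolding gdeg_def by simp
    then show False using degb dpos n_1 by auto
  qed
  obtain rs where cp: "char_poly ?A = (\<Prod>r\<leftarrow>rs. [:-r, 1:])" and len: "length rs = n"
    using char_split by blast
  have pr: "proots (char_poly ?A) = mset rs"
  proof -
    have "0 \<notin> set (map (\<lambda>r. [:-r, 1:]) rs)" by auto
    then have "proots (\<Prod>p\<leftarrow>map (\<lambda>r. [:-r, 1:]) rs. p) = sum_list (map proots (map (\<lambda>r. [:-r, 1:]) rs))"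
      by (rule proots_prod_list)
    also have "\<dots> = mset rs" by (simp add: o_def sum_list_singletons)
    finally show ?thesis unfolding cp by (simp add: o_def)
  qed
  define L where "L = eigenvalues_desc ?A"
  have L: "L = rev (sort rs)" unfolding L_def eigenvalues_desc_def pr by simp
  have lenL: "length (sort rs) = n" using len by simp
  have gap: "spectral_gap n E = 1 - L ! 1" unfolding spectral_gap_def L_def ..
  have L1: "L ! 1 = sort rs ! (n - 2)" unfolding L using lenL n2 by (simp add: rev_nth numeral_2_eq_2)
  have L0: "L ! 0 = sort rs ! (n - 1)" unfolding L using lenL n2 by (simp add: rev_nth)
  have srt: "sort rs ! (n - 2) \<le> sort rs ! (n - 1)"
    using lenL n2 by (intro sorted_nth_mono) auto
  have evs: "\<exists>v. eigenvector ?A v r" if r: "r \<in> set rs" for r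
  proof -
    have "poly (char_poly ?A) r = 0" unfolding cp using r by (rule linear_poly_root)
    then have "eigenvalue ?A r" using eigenvalue_root_char_poly[OF WM_carrier] by simp
    then show ?thesis unfolding eigenvalue_def by blast
  qed
  have le1: "r \<le> 1" if r: "r \<in> set rs" for r
  proof -
    obtain v where v: "eigenvector ?A v r" using evs[OF r] by blast
    show ?thesis using eig_le1[OF eig_real(2)[OF v] eig_real(3)[OF v]] .
  qed
  have i1: "n - 2 < length (sort rs)" "n - 1 < length (sort rs)" "n - 2 \<noteq> n - 1" using lenL n2 by auto
  have "sort rs ! (n - 2) \<in> set (sort rs)" using i1(1) by (rule nth_mem)
  then have in1: "sort rs ! (n - 2) \<in> set rs" by simp
  have "sort rs ! (n - 1) \<in> set (sort rs)" using i1(2) by (rule nth_mem)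
  then have in0: "sort rs ! (n - 1) \<in> set rs" by simp
  define \<mu> where "\<mu> = L ! 1"
  show ?thesis
  proof (cases "\<mu> < 1")
    case True
    have mu_in: "\<mu> \<in> set rs" unfolding \<mu>_def L1 by (rule in1)
    obtain v where v: "eigenvector ?A v \<mu>" using evs[OF mu_in] by blast
    have eq: "\<forall>x<n. (\<Sum>y<n. if E x y then vec_index v y else 0) = \<mu> * d x * vec_index v x"
      and N: "0 < nrm (vec_index v)" using eig_real[OF v] by auto
    have orth: "(\<Sum>x<n. d x * vec_index v x) = 0" using eig_orth[OF eq] True by simp
    have "cheeger n E \<le> 96 * real (k + 1) * (1 - \<mu>)"
      by (rule eig_bound[OF eq True orth N k1 kd n0])
    then show ?thesis unfolding gap \<mu>_def by simp
  next
    case False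
    have mu1: "\<mu> = 1" using False le1[OF in1] unfolding \<mu>_def L1 by simp
    have s1: "sort rs ! (n - 2) = 1" using mu1 unfolding \<mu>_def L1 .
    have s0: "sort rs ! (n - 1) = 1" using srt s1 le1[OF in0] by simp
    have "2 \<le> count (mset (sort rs)) 1"
      by (rule count_two[OF i1(1) i1(2) i1(3) s1 s0])
    then have c2: "2 \<le> count (proots (char_poly ?A)) 1" unfolding pr by simp
    have "cheeger n E \<le> 0"
    proof (rule ccontr)
      assume "\<not> cheeger n E \<le> 0"
      then have ch: "0 < cheeger n E" by simp
      obtain nas where jnf: "jordan_nf ?A nas" using jordan_nf_exists[OF WM_carrier cp] by blast
      have "count (proots (char_poly ?A)) 1 = sum_list (map fst [(m, e)\<leftarrow>nas. e = 1])"
        unfolding jordan_nf_char_poly[OF jnf] by (rule count_proots_jordan)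
      then have S2: "2 \<le> sum_list (map fst [(m, e)\<leftarrow>nas. e = 1])" using c2 by simp
      have "dim_gen_eigenspace ?A 1 2 = (\<Sum>m\<leftarrow>map fst [(m, e)\<leftarrow>nas. e = 1]. min 2 m)"
        by (rule dim_gen_eigenspace[OF jnf])
      also have "\<dots> \<ge> min 2 (sum_list (map fst [(m, e)\<leftarrow>nas. e = 1]))"
        by (rule sum_min2)
      finally have "2 \<le> dim_gen_eigenspace ?A 1 2" using S2 by simp
      moreover have "dim_gen_eigenspace ?A 1 2 \<le> 1"
        unfolding dim_gen_eigenspace_def by (rule kernel_small[OF ch n0])
      ultimately show False by simp
    qed
    then show ?thesis unfolding gap using mu1 unfolding \<mu>_def by simp
  qed
qed

end

theorem theorem1p2:
  fixes \<delta> :: real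
  assumes "0 < \<delta>" and "\<delta> < 1"
  shows "\<exists>c>0. \<forall>n E. simple_graph n E \<and> n \<ge> 1
           \<and> (\<forall>v<n. real (gdeg n E v) \<ge> \<delta> * real n)
           \<longrightarrow> spectral_gap n E \<ge> c * cheeger n E"
proof -
  define k where "k = nat \<lceil>4 / \<delta>\<rceil>"
  have kge: "4 / \<delta> \<le> real k" unfolding k_def by (rule real_nat_ceiling_ge)
  have pos: "0 < 4 / \<delta>" using assms by simp
  have k1: "1 \<le> k"
  proof -
    have "0 < real k" using kge pos by linarith
    then show ?thesis by simp
  qed
  have kd: "1 / \<delta> < real (k + 1) / 4" using kge by (simp add: field_simps)
  define c where "c = 1 / (96 * real (k + 1))"
  have cpos: "0 < c" unfolding c_def by simp
  show ?thesis
  proof (intro exI[of _ c] conjI allI impI cpos)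
    fix n E
    assume H: "simple_graph n E \<and> n \<ge> 1 \<and> (\<forall>v<n. real (gdeg n E v) \<ge> \<delta> * real n)"
    interpret dg n E \<delta> using H assms by unfold_locales auto
    have n1: "1 \<le> n" using H by blast
    have "cheeger n E \<le> 96 * real (k + 1) * spectral_gap n E"
      by (rule final[OF n1 k1 kd])
    then show "c * cheeger n E \<le> spectral_gap n E"
      unfolding c_def by (simp add: field_simps)
  qed
qed

end
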